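(* For every $(a,b)\in\mathbb{Z}^2$, $\mu_1E_{(a,b)}-E_{\psi(a,b)}\in q^{-\frac12}\mathcal{A}_+$, where $\psi(a,b)=(-a-[-b]_+,\,b)$.
   Context: Let $\mathcal{T}$ be the quantum torus over $\mathbb{Z}[q^{\pm\frac12}]$ generated by $X_1^{\pm1},X_2^{\pm1}$ with $X_1X_2=qX_2X_1$, with skew field of fractions $\mathcal{F}$. Define $X_k\in\mathcal{F}$ ($k\in\mathbb{Z}$) by $X_{k-1}X_{k+1}=q^{\frac12}X_k+1$ for $k$ odd and $X_{k-1}X_{k+1}=q^2X_k^4+1$ for $k$ even; $\mathcal{A}_q(1,4)$ is the $\mathbb{Z}[q^{\pm\frac12}]$-subalgebra of $\mathcal{F}$ generated by all $X_k$. For $x\in\mathbb{Z}$, $[x]_+=\max(x,0)$. Standard monomials: $E_{(a,b)}=q^{-\frac12ab}X_3^{[-a]_+}X_1^{[a]_+}X_2^{[b]_+}X_0^{[-b]_+}$; $\mathcal{A}_+=\bigoplus_{(a,b)\in\mathbb{Z}^2}\mathbb{Z}[q^{-\frac12}]E_{(a,b)}$. Also $\mu_1E_{(a,b)}=q^{-\frac12ab}X_4^{[-b]_+}X_2^{[b]_+}X_3^{[a]_+}X_1^{[-a]_+}$. *)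

theory Defs
  imports Main
begin

definition pp :: "int \<Rightarrow> int" where
  "pp x = max x 0"

text \<open>An embedding of the quantum torus T over Z[q^(+-1/2)] into a division ring:
  t is the image of q^(1/2) (central), x1, x2 the images of X_1, X_2, with
  X_1 X_2 = q X_2 X_1, and the images of the Z-basis q^(i/2) X_1^j X_2^k of T
  are Z-linearly independent (i.e. the induced ring map T -> D is injective).
  By the universal property of the Ore skew field of fractions F of T, the
  division subring generated by such an image is a copy of F.\<close>
definition qtorus_embedding :: "'a::division_ring \<Rightarrow> 'a \<Rightarrow> 'a \<Rightarrow> bool" where
  "qtorus_embedding t x1 x2 \<longleftrightarrow>
     t \<noteq> 0 \<and> x1 \<noteq> 0 \<and> x2 \<noteq> 0 \<and>
     (\<forall>y. t * y = y * t) \<and>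
     x1 * x2 = t ^ 2 * (x2 * x1) \<and>
     (\<forall>S c. finite (S :: (int \<times> int \<times> int) set) \<longrightarrow>
        (\<Sum>(i,j,k)\<in>S. of_int (c (i,j,k)) * (t powi i * x1 powi j * x2 powi k)) = 0 \<longrightarrow>
        (\<forall>s\<in>S. c s = (0::int)))"

text \<open>The exchange relations of A_q(1,4), with q^(1/2) = t (so q = t^2, q^2 = t^4).\<close>
definition cluster_seq :: "'a::division_ring \<Rightarrow> (int \<Rightarrow> 'a) \<Rightarrow> bool" where
  "cluster_seq t X \<longleftrightarrow>
     (\<forall>k. (odd k \<longrightarrow> X (k - 1) * X (k + 1) = t * X k + 1) \<and>
          (even k \<longrightarrow> X (k - 1) * X (k + 1) = t ^ 4 * X k ^ 4 + 1))"

definition stdE :: "'a::division_ring \<Rightarrow> (int \<Rightarrow> 'a) \<Rightarrow> int \<Rightarrow> int \<Rightarrow> 'a" where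
  "stdE t X a b = t powi (- (a * b)) * X 3 ^ nat (pp (- a)) * X 1 ^ nat (pp a)
                    * X 2 ^ nat (pp b) * X 0 ^ nat (pp (- b))"

definition mu1E :: "'a::division_ring \<Rightarrow> (int \<Rightarrow> 'a) \<Rightarrow> int \<Rightarrow> int \<Rightarrow> 'a" where
  "mu1E t X a b = t powi (- (a * b)) * X 4 ^ nat (pp (- b)) * X 2 ^ nat (pp b)
                    * X 3 ^ nat (pp a) * X 1 ^ nat (pp (- a))"

text \<open>Membership in q^(-1/2) A_+, i.e. in the span of the E_(a,b) with coefficients
  in q^(-1/2) Z[q^(-1/2)] (integer polynomials in q^(-1/2) without constant term).\<close>
definition in_qminus_Aplus :: "'a::division_ring \<Rightarrow> (int \<Rightarrow> 'a) \<Rightarrow> 'a \<Rightarrow> bool" where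
  "in_qminus_Aplus t X y \<longleftrightarrow>
     (\<exists>S c. finite (S :: (int \<times> int \<times> nat) set) \<and>
        y = (\<Sum>(a,b,n)\<in>S. of_int (c (a,b,n)) * inverse t ^ Suc n * stdE t X a b))"

definition psi :: "int \<times> int \<Rightarrow> int \<times> int" where
  "psi ab = (- fst ab - pp (- snd ab), snd ab)"

end

theory Submission
  imports Defs
begin

declare power_int_numeral [simp del] power_int_1_right [simp del] power_int_of_nat [simp del] power_int_minus1_right [simp del]

locale qca =
  fixes t :: "'a::division_ring" and X :: "int \<Rightarrow> 'a"
  assumes t_nz: "t \<noteq> 0" and t_central: "\<And>y. t * y = y * t"
    and X1_nz: "X 1 \<noteq> 0" and X2_nz: "X 2 \<noteq> 0"
    and R12: "X 1 * X 2 = t^2 * (X 2 * X 1)"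
    and cs: "cluster_seq t X"
begin

abbreviation T :: "int \<Rightarrow> 'a" where "T e \<equiv> t powi e"

lemma tpow_comm: "t ^ n * y = y * t ^ n"
  by (induction n) (simp_all add: mult.assoc t_central, metis mult.assoc t_central)

lemma tinv_comm: "inverse t * y = y * inverse t"
proof -
  have "inverse t * (t * y) * inverse t = inverse t * (y * t) * inverse t" by (simp add: t_central)
  also have "inverse t * (t * y) * inverse t = y * inverse t" using t_nz by (simp flip: mult.assoc)
  also have "inverse t * (y * t) * inverse t = inverse t * y" using t_nz by (simp add: mult.assoc)
  finally show ?thesis by simp
qed

lemma tinvpow_comm: "inverse t ^ n * y = y * inverse t ^ n"
  by (induction n) (simp_all add: mult.assoc tinv_comm, metis mult.assoc tinv_comm)

lemma T_comm: "T e * y = y * T e"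
  by (simp add: power_int_def tpow_comm tinvpow_comm)

lemma T_add: "T a * T b = T (a + b)"
  using power_int_add[of t a b] t_nz by simp

lemma T_add2: "T a * (T b * y) = T (a + b) * y"
  by (simp add: T_add flip: mult.assoc)

lemma T_left: "y * (T e * z) = T e * (y * z)"
  by (metis T_comm mult.assoc)

lemma T0: "T 0 = 1" by simp

lemma of_int_comm: "of_int n * y = y * (of_int n :: 'a)"
  by (simp add: mult_of_int_commute)

lemma T_right: "X k * T e = T e * X k" by (simp add: T_comm)
lemma T_rightp: "X k ^ n * T e = T e * X k ^ n" by (simp add: T_comm)
lemma T_leftX: "X k * (T e * z) = T e * (X k * z)" by (rule T_left)
lemma T_leftXp: "X k ^ n * (T e * z) = T e * (X k ^ n * z)" by (rule T_left)

abbreviation "x0 \<equiv> X 0"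
abbreviation "x1 \<equiv> X 1"
abbreviation "x2 \<equiv> X 2"
abbreviation "x3 \<equiv> X 3"
abbreviation "x4 \<equiv> X 4"

lemma T1: "T 1 = t" by (simp add: power_int_1_right)
lemma tT: "t = T 1" by (simp add: power_int_1_right)
lemma t2T: "t^2 = T 2" by (simp add: power_int_def)
lemma t4T: "t^4 = T 4" by (simp add: power_int_def)

lemmas nrm = mult.assoc distrib_left distrib_right T_leftX T_leftXp T_add2 T_add T_right T_rightp

lemma E0: "x0 * x2 = T 1 * x1 + 1"
proof -
  have "odd (1::int)" by simp
  hence "X (1-1) * X (1+1) = t * X 1 + 1" using cs unfolding cluster_seq_def by blast
  thus ?thesis by (simp add: T1)
qed
lemma E1: "x1 * x3 = T 4 * x2^4 + 1"
proof -
  have "even (2::int)" by simp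
  hence "X (2-1) * X (2+1) = t^4 * X 2 ^ 4 + 1" using cs unfolding cluster_seq_def by blast
  thus ?thesis by (simp add: t4T)
qed
lemma E2: "x2 * x4 = T 1 * x3 + 1"
proof -
  have "odd (3::int)" by simp
  hence "X (3-1) * X (3+1) = t * X 3 + 1" using cs unfolding cluster_seq_def by blast
  thus ?thesis by (simp add: T1)
qed
lemma R12': "x1 * x2 = T 2 * (x2 * x1)" using R12 by (simp add: t2T)

lemma powS: "(a::'a)^n * a = a^(n+1)" by (simp only: Suc_eq_plus1[symmetric] power_Suc2)
lemma powS': "(a::'a) * a^n = a^(n+1)" by (simp only: Suc_eq_plus1[symmetric] power_Suc)
lemma powSa: "(a::'a)^n * (a * y) = a^(n+1) * y" by (simp only: Suc_eq_plus1[symmetric] power_Suc2 mult.assoc)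

lemma asc: "(a::'a) * b = c \<Longrightarrow> a * (b * y) = c * y" by (metis mult.assoc)

lemmas E0a = asc[OF E0] and E1a = asc[OF E1] and E2a = asc[OF E2] and R12a = asc[OF R12']

lemma R01: "x0 * x1 = T 2 * (x1 * x0)"
proof -
  have "(x0 * x1) * x2 = (T 2 * (x1 * x0)) * x2"
    by (simp add: R12a R12' E0a E0 nrm)
  thus ?thesis using X2_nz by simp
qed

lemma R23: "x2 * x3 = T 2 * (x3 * x2)"
proof -
  have "x1 * (x2 * x3) = x1 * (T 2 * (x3 * x2))"
    by (simp add: R12a R12' E1a E1 nrm powS powS')
  thus ?thesis using X1_nz by simp
qed

lemma qpow1: "a * b = T k * (b * a) \<Longrightarrow> a * b^j = T (k * int j) * (b^j * a)"
proof (induction j)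
  case 0 thus ?case by (simp add: T0)
next
  case (Suc j)
  have "a * b^Suc j = (a * b^j) * b" by (simp only: power_Suc2 mult.assoc)
  also have "... = T (k * int j) * (b^j * (a * b))" by (simp only: Suc.IH[OF Suc.prems] mult.assoc)
  also have "... = T (k * int j) * (b^j * (T k * (b * a)))" by (simp only: Suc.prems)
  also have "... = T (k * int j) * (T k * ((b^j * b) * a))" by (simp only: T_left[of "b^j"] mult.assoc)
  also have "... = T (k * int j + k) * (b^Suc j * a)" by (simp only: T_add2 power_Suc2 mult.assoc)
  also have "k * int j + k = k * int (Suc j)" by (simp add: algebra_simps)
  finally show ?case .
qed

lemma qpow: "a * b = T k * (b * a) \<Longrightarrow> a^i * b^j = T (k * int i * int j) * (b^j * a^i)"
proof (induction i)
  case 0 thus ?case by (simp add: T0)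
next
  case (Suc i)
  have "a^Suc i * b^j = a * (a^i * b^j)" by (simp only: power_Suc mult.assoc)
  also have "... = a * (T (k * int i * int j) * (b^j * a^i))" by (simp only: Suc.IH[OF Suc.prems])
  also have "... = T (k * int i * int j) * ((a * b^j) * a^i)" by (simp only: T_left[of a] mult.assoc)
  also have "... = T (k * int i * int j) * ((T (k * int j) * (b^j * a)) * a^i)" by (simp only: qpow1[OF Suc.prems])
  also have "... = T (k * int i * int j + k * int j) * (b^j * a^Suc i)" by (simp only: mult.assoc T_add2 power_Suc)
  also have "k * int i * int j + k * int j = k * int (Suc i) * int j" by (simp add: algebra_simps)
  finally show ?case .
qed

lemmas R01a = asc[OF R01] and R23a = asc[OF R23]

lemma R34: "x3 * x4 = T 2 * (x4 * x3)"
proof -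
  have "x2 * (x3 * x4) = x2 * (T 2 * (x4 * x3))"
    by (simp add: R23a E2a E2 nrm)
  thus ?thesis using X2_nz by simp
qed

lemma E0r: "x2 * x0 = T (-1) * x1 + 1"
proof -
  have "(x2 * x0) * x2 = (T (-1) * x1 + 1) * x2"
    by (simp add: R12a R12' E0a E0 nrm)
  thus ?thesis using X2_nz by simp
qed

lemma R12p: "x1 * x2^j = T (2 * int j) * (x2^j * x1)"
  using qpow[OF R12', of 1 j] by simp

lemma E1r: "x3 * x1 = T (-4) * x2^4 + 1"
proof -
  have "x1 * (x3 * x1) = x1 * (T (-4) * x2^4 + 1)"
    by (simp add: E1a E1 nrm R12p)
  thus ?thesis using X1_nz by simp
qed

lemma E2r: "x4 * x2 = T (-1) * x3 + 1"
proof -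
  have "x2 * (x4 * x2) = x2 * (T (-1) * x3 + 1)"
    by (simp add: E2a E2 nrm R23)
  thus ?thesis using X2_nz by simp
qed

lemmas E0ra = asc[OF E0r] and E1ra = asc[OF E1r] and E2ra = asc[OF E2r]

lemma E30: "x3 * x0 = T 1 * x4 + T (-3) * x2^3"
proof -
  have "(x3 * x0) * x2 = (T 1 * x4 + T (-3) * x2^3) * x2"
    by (simp add: E0a E0 nrm E1r E2r powS add_ac)
  thus ?thesis using X2_nz by simp
qed

lemma E41: "x4 * x1 = T 1 * x0 + T (-3) * x2^3"
proof -
  have "x2 * (x4 * x1) = x2 * (T 1 * x0 + T (-3) * x2^3)"
    by (simp add: E2a E2 nrm E1ra E1r E0r powS' add_ac)
  thus ?thesis using X2_nz by simp
qed

end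

context qca begin

abbreviation SE :: "int \<Rightarrow> int \<Rightarrow> 'a" where "SE a b \<equiv> stdE t X a b"

inductive Lb :: "int \<Rightarrow> int \<Rightarrow> int \<Rightarrow> 'a \<Rightarrow> bool" where
  Lb0: "Lb d r1 r2 0"
| Lb1: "e \<le> d \<Longrightarrow> r1 \<le> a \<Longrightarrow> r2 \<le> b \<Longrightarrow> Lb d r1 r2 (of_int n * T e * SE a b)"
| Lbadd: "Lb d r1 r2 x \<Longrightarrow> Lb d r1 r2 y \<Longrightarrow> Lb d r1 r2 (x + y)"

lemma Lb_mono: "Lb d r1 r2 x \<Longrightarrow> d \<le> d' \<Longrightarrow> r1' \<le> r1 \<Longrightarrow> r2' \<le> r2 \<Longrightarrow> Lb d' r1' r2' x"
proof (induction rule: Lb.induct)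
  case (Lb0 d r1 r2) thus ?case by (simp add: Lb.Lb0)
next
  case (Lb1 e d r1 a r2 b n) thus ?case by (intro Lb.Lb1) auto
next
  case (Lbadd d r1 r2 x y) thus ?case by (simp add: Lb.Lbadd)
qed

lemma Lb_scale: "Lb d r1 r2 x \<Longrightarrow> Lb (d + k) r1 r2 (T k * x)"
proof (induction rule: Lb.induct)
  case (Lb0 d r1 r2) thus ?case by (simp add: Lb.Lb0)
next
  case (Lb1 e d r1 a r2 b n)
  have "T k * (of_int n * T e * SE a b) = (T k * of_int n) * (T e * SE a b)" by (simp only: mult.assoc)
  also have "... = (of_int n * T k) * (T e * SE a b)" by (simp only: T_comm)
  also have "... = of_int n * T (k + e) * SE a b" by (simp only: mult.assoc T_add2)
  finally have "T k * (of_int n * T e * SE a b) = of_int n * T (k + e) * SE a b" .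
  moreover have "Lb (d + k) r1 r2 (of_int n * T (k + e) * SE a b)" using Lb1 by (intro Lb.Lb1) auto
  ultimately show ?case by simp
next
  case (Lbadd d r1 r2 x y) thus ?case by (simp add: distrib_left Lb.Lbadd)
qed

lemma Lb_scale': "Lb d r1 r2 x \<Longrightarrow> d + k \<le> d' \<Longrightarrow> Lb d' r1 r2 (T k * x)"
  using Lb_scale Lb_mono by blast

lemma Lb_int: "Lb d r1 r2 x \<Longrightarrow> Lb d r1 r2 (of_int m * x)"
proof (induction rule: Lb.induct)
  case (Lb0 d r1 r2) thus ?case by (simp add: Lb.Lb0)
next
  case (Lb1 e d r1 a r2 b n)
  have "Lb d r1 r2 (of_int (m * n) * T e * SE a b)" using Lb1 by (intro Lb.Lb1)
  thus ?case by (simp add: mult.assoc)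
next
  case (Lbadd d r1 r2 x y) thus ?case by (simp add: distrib_left Lb.Lbadd)
qed

lemma Lb_neg: "Lb d r1 r2 x \<Longrightarrow> Lb d r1 r2 (- x)"
  using Lb_int[of d r1 r2 x "-1"] by simp

lemma Lb_diff: "Lb d r1 r2 x \<Longrightarrow> Lb d r1 r2 y \<Longrightarrow> Lb d r1 r2 (x - y)"
  using Lb_neg Lbadd by (metis diff_conv_add_uminus)

lemma Lb_single: "e \<le> d \<Longrightarrow> r1 \<le> a \<Longrightarrow> r2 \<le> b \<Longrightarrow> Lb d r1 r2 (T e * SE a b)"
  using Lb1[of e d r1 a r2 b 1] by simp

lemma Lb_sum: "finite S \<Longrightarrow> (\<And>i. i \<in> S \<Longrightarrow> Lb d r1 r2 (f i)) \<Longrightarrow> Lb d r1 r2 (\<Sum>i\<in>S. f i)"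
  by (induction S rule: finite_induct) (auto intro: Lb0 Lbadd)

lemma Lb_to_in: "Lb (-1) r1 r2 x \<Longrightarrow> in_qminus_Aplus t X x"
proof (induction "-1::int" r1 r2 x rule: Lb.induct)
  case (Lb0 r1 r2)
  show ?case unfolding in_qminus_Aplus_def by (rule exI[of _ "{}"]) simp
next
  case (Lb1 e r1 a r2 b n)
  let ?k = "nat (-1 - e)"
  have "inverse t ^ Suc ?k = T e"
  proof -
    have gen: "inverse t ^ Suc k = T (- int (Suc k))" for k by (simp add: power_int_def nat_add_distrib del: power_Suc)
    have "inverse t ^ Suc ?k = T (- int (Suc ?k))" by (rule gen)
    also have "- int (Suc ?k) = e" using Lb1 by simp
    finally show ?thesis .
  qed
  hence "of_int n * T e * SE a b = (\<Sum>(a', b', k)\<in>{(a, b, ?k)}. of_int n * inverse t ^ Suc k * SE a' b')"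
    by simp
  thus ?case unfolding in_qminus_Aplus_def
    by (intro exI[of _ "{(a, b, ?k)}"] exI[of _ "\<lambda>_. n"]) simp
next
  case (Lbadd r1 r2 x y)
  from Lbadd obtain S1 c1 S2 c2 where S: "finite S1" "finite S2"
    and x: "x = (\<Sum>(a,b,n)\<in>S1. of_int (c1 (a,b,n)) * inverse t ^ Suc n * SE a b)"
    and y: "y = (\<Sum>(a,b,n)\<in>S2. of_int (c2 (a,b,n)) * inverse t ^ Suc n * SE a b)"
    unfolding in_qminus_Aplus_def by blast
  define c where "c = (\<lambda>p. (if p \<in> S1 then c1 p else 0) + (if p \<in> S2 then c2 p else 0))"
  define g where "g = (\<lambda>c' p. case p of (a,b,n) \<Rightarrow> of_int (c' p) * inverse t ^ Suc n * SE a b)"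
  have gsplit: "g c p = g (\<lambda>p. if p \<in> S1 then c1 p else 0) p + g (\<lambda>p. if p \<in> S2 then c2 p else 0) p" for p
    unfolding g_def c_def by (cases p) (simp add: distrib_right)
  have 1: "(\<Sum>p\<in>S1 \<union> S2. g (\<lambda>p. if p \<in> S1 then c1 p else 0) p) = (\<Sum>p\<in>S1. g c1 p)"
    by (rule sum.mono_neutral_cong_right) (auto simp: S g_def split: prod.splits)
  have 2: "(\<Sum>p\<in>S1 \<union> S2. g (\<lambda>p. if p \<in> S2 then c2 p else 0) p) = (\<Sum>p\<in>S2. g c2 p)"
    by (rule sum.mono_neutral_cong_right) (auto simp: S g_def split: prod.splits)
  have "(\<Sum>p\<in>S1 \<union> S2. g c p) = (\<Sum>p\<in>S1 \<union> S2. g (\<lambda>p. if p \<in> S1 then c1 p else 0) p) + (\<Sum>p\<in>S1 \<union> S2. g (\<lambda>p. if p \<in> S2 then c2 p else 0) p)"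
    by (simp only: gsplit sum.distrib)
  also have "... = (\<Sum>p\<in>S1. g c1 p) + (\<Sum>p\<in>S2. g c2 p)" by (simp only: 1 2)
  also have "... = x + y" unfolding x y g_def by (simp add: case_prod_unfold)
  finally have "x + y = (\<Sum>p\<in>S1 \<union> S2. g c p)" by simp
  thus ?case unfolding in_qminus_Aplus_def g_def using S
    by (intro exI[of _ "S1 \<union> S2"] exI[of _ c]) (simp add: case_prod_unfold)
qed

end

context qca begin

definition M :: "nat \<Rightarrow> nat \<Rightarrow> nat \<Rightarrow> nat \<Rightarrow> 'a" where
  "M i s j n = x3^i * x1^s * x2^j * x0^n"

lemma R21: "x2 * x1 = T (-2) * (x1 * x2)"
  by (simp add: R12' T_add2)

lemma SE_M: "i = 0 \<or> s = 0 \<Longrightarrow> j = 0 \<or> n = 0 \<Longrightarrow>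
  M i s j n = T ((int i - int s) * (int n - int j)) * SE (int s - int i) (int j - int n)"
  unfolding M_def stdE_def pp_def
  by (auto simp: mult.assoc T_add2 algebra_simps)

lemma W1: "M (Suc i) (Suc s) j n = T (-4 - 8 * int s) * M i s (4+j) n + M i s j n"
proof -
  have a: "x2^4 * x1^s = T (-8 * int s) * (x1^s * x2^4)"
    using qpow[OF R21, of 4 s] by simp
  have "M (Suc i) (Suc s) j n = x3^i * (x3 * x1) * x1^s * x2^j * x0^n"
    unfolding M_def by (simp only: power_Suc2[of x3 i] power_Suc[of x1 s] mult.assoc)
  also have "... = T (-4) * (x3^i * (x2^4 * x1^s) * x2^j * x0^n) + x3^i * x1^s * x2^j * x0^n"
    by (simp add: E1r nrm)
  also have "... = T (-4) * (T (-8 * int s) * (x3^i * x1^s * (x2^4 * x2^j) * x0^n)) + x3^i * x1^s * x2^j * x0^n"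
    by (simp add: a nrm)
  also have "... = T (-4 - 8 * int s) * M i s (4+j) n + M i s j n"
    unfolding M_def by (simp add: T_add2 power_add mult.assoc)
  finally show ?thesis .
qed

lemma W2: "M i s (Suc j) (Suc n) = T (-1 - 2 * int j) * M i (Suc s) j n + M i s j n"
proof -
  have a: "x2^j * x1 = T (-2 * int j) * (x1 * x2^j)"
    using qpow[OF R21, of j 1] by simp
  have "M i s (Suc j) (Suc n) = x3^i * x1^s * (x2^j * (x2 * x0)) * x0^n"
    unfolding M_def by (simp only: power_Suc2[of x2 j] power_Suc[of x0 n] mult.assoc)
  also have "... = T (-1) * (x3^i * x1^s * (x2^j * x1) * x0^n) + x3^i * x1^s * x2^j * x0^n"
    by (simp add: E0r nrm)
  also have "... = T (-1) * (T (-2 * int j) * (x3^i * (x1^s * x1) * x2^j * x0^n)) + x3^i * x1^s * x2^j * x0^n"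
    by (simp add: a nrm)
  also have "... = T (-1 - 2 * int j) * M i (Suc s) j n + M i s j n"
    unfolding M_def by (simp add: T_add2 powSa mult.assoc)
  finally show ?thesis .
qed

lemma W: "Lb ((int i - int s) * (int n - int j)) (- int i) (- int n) (M i s j n)"
proof (induction "i + n" arbitrary: i s j n rule: less_induct)
  case less
  show ?case
  proof (cases "i > 0 \<and> s > 0")
    case True
    then obtain i' s' where isv: "i = Suc i'" "s = Suc s'" by (meson gr0_implies_Suc)
    have IH1: "Lb ((int i' - int s') * (int n - int (4+j))) (- int i') (- int n) (M i' s' (4+j) n)"
      using less(1)[of i' n s' "4+j"] isv by simp
    have IH2: "Lb ((int i' - int s') * (int n - int j)) (- int i') (- int n) (M i' s' j n)"
      using less(1)[of i' n s' j] isv by simp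
    have b1: "(int i' - int s') * (int n - int (4+j)) + (-4 - 8 * int s') \<le> (int i - int s) * (int n - int j)"
      using isv by (simp add: algebra_simps)
    have b2: "(int i' - int s') * (int n - int j) \<le> (int i - int s) * (int n - int j)"
      using isv by simp
    have "Lb ((int i - int s) * (int n - int j)) (- int i) (- int n) (T (-4 - 8 * int s') * M i' s' (4+j) n)"
      using Lb_scale'[OF IH1 b1] Lb_mono isv by force
    moreover have "Lb ((int i - int s) * (int n - int j)) (- int i) (- int n) (M i' s' j n)"
      using Lb_mono[OF IH2 b2] isv by force
    ultimately show ?thesis using isv W1 Lbadd by simp
  next
    case nc: False
    show ?thesis
    proof (cases "j > 0 \<and> n > 0")
      case True
      then obtain j' n' where jn: "j = Suc j'" "n = Suc n'" by (meson gr0_implies_Suc)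
      have IH1: "Lb ((int i - int (Suc s)) * (int n' - int j')) (- int i) (- int n') (M i (Suc s) j' n')"
        using less(1)[of i n' "Suc s" j'] jn by simp
      have IH2: "Lb ((int i - int s) * (int n' - int j')) (- int i) (- int n') (M i s j' n')"
        using less(1)[of i n' s j'] jn by simp
      have b1: "(int i - int (Suc s)) * (int n' - int j') + (-1 - 2 * int j') \<le> (int i - int s) * (int n - int j)"
        using jn by (simp add: algebra_simps)
      have b2: "(int i - int s) * (int n' - int j') \<le> (int i - int s) * (int n - int j)"
        using jn by simp
      have "Lb ((int i - int s) * (int n - int j)) (- int i) (- int n) (T (-1 - 2 * int j') * M i (Suc s) j' n')"
        using Lb_scale'[OF IH1 b1] Lb_mono jn by force
      moreover have "Lb ((int i - int s) * (int n - int j)) (- int i) (- int n) (M i s j' n')"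
        using Lb_mono[OF IH2 b2] jn by force
      ultimately show ?thesis using jn W2 Lbadd by simp
    next
      case False
      hence "M i s j n = T ((int i - int s) * (int n - int j)) * SE (int s - int i) (int j - int n)"
        using nc by (intro SE_M) auto
      thus ?thesis by (simp add: Lb_single)
    qed
  qed
qed

end

context qca begin

lemma SE_eq: "SE a b = T (-(a*b)) * M (nat (pp (-a))) (nat (pp a)) (nat (pp b)) (nat (pp (-b)))"
  by (simp add: stdE_def M_def mult.assoc)

lemma pp_facts: "int (nat (pp a)) - int (nat (pp (-a))) = a" "int (nat (pp (-a))) = - min a 0"
  by (auto simp: pp_def)

lemma coef_left: "z * (of_int n * T e * y) = of_int n * T e * (z * y)"
proof -
  have "z * (of_int n * T e * y) = (z * of_int n) * (T e * y)" by (simp only: mult.assoc)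
  also have "... = of_int n * (z * (T e * y))" by (simp only: mult_of_int_commute mult.assoc)
  also have "z * (T e * y) = T e * (z * y)" by (rule T_left)
  finally show ?thesis by (simp only: mult.assoc)
qed

lemma x3M: "x3^p * M i s j n = M (p+i) s j n"
  by (simp add: M_def power_add mult.assoc)

lemma coef_right: "(of_int n * T e * y) * z = of_int n * T e * (y * z)"
  by (simp add: mult.assoc)

lemma MulL3: "Lb d r1 r2 Z \<Longrightarrow> r1 \<le> 0 \<Longrightarrow> r2 \<le> 0 \<Longrightarrow> Lb (d - int p * r2) (r1 - int p) r2 (x3^p * Z)"
proof (induction rule: Lb.induct)
  case (Lb0 d r1 r2) thus ?case by (simp add: Lb.Lb0)
next
  case (Lb1 e d r1 a r2 b n)
  let ?i = "nat (pp (-a))" and ?s = "nat (pp a)" and ?j = "nat (pp b)" and ?n = "nat (pp (-b))"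
  have eq: "x3^p * (of_int n * T e * SE a b) = of_int n * T (e - a*b) * M (p + ?i) ?s ?j ?n"
    unfolding coef_left SE_eq by (simp only: T_leftXp x3M T_add2 mult.assoc diff_conv_add_uminus)
  have W': "Lb ((int (p + ?i) - int ?s) * (int ?n - int ?j)) (- int (p + ?i)) (- int ?n) (M (p + ?i) ?s ?j ?n)"
    by (rule W)
  have k1: "int (p + ?i) - int ?s = int p - a" and k2: "int ?n - int ?j = -b"
    using pp_facts[of a] pp_facts[of b] by auto
  have bnd: "e - a*b + (int p - a) * (-b) \<le> d - int p * r2"
  proof -
    have "r2 * int p \<le> b * int p" using Lb1 by (intro mult_right_mono) auto
    thus ?thesis using Lb1 by (simp add: algebra_simps)
  qed
  have ex: "(int (p + ?i) - int ?s) * (int ?n - int ?j) = (int p - a) * (-b)" using k1 k2 by simp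
  have s1: "r1 - int p \<le> - int (p + ?i)" using Lb1 by (simp add: pp_def)
  have s2: "r2 \<le> - int ?n" using Lb1 by (simp add: pp_def)
  have W2: "Lb ((int p - a) * (-b)) (r1 - int p) r2 (M (p + ?i) ?s ?j ?n)"
    using Lb_mono[OF W' _ s1 s2] ex by simp
  have bnd': "(int p - a) * (-b) + (e - a*b) \<le> d - int p * r2" using bnd by (simp add: algebra_simps)
  have "Lb (d - int p * r2) (r1 - int p) r2 (T (e - a*b) * M (p + ?i) ?s ?j ?n)"
    by (rule Lb_scale'[OF W2 bnd'])
  hence "Lb (d - int p * r2) (r1 - int p) r2 (of_int n * (T (e - a*b) * M (p + ?i) ?s ?j ?n))"
    by (rule Lb_int)
  thus ?case unfolding eq by (simp only: mult.assoc)
next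
  case (Lbadd d r1 r2 x y) thus ?case by (simp add: distrib_left Lb.Lbadd)
qed

lemma R01p: "x0^a * x1^b = T (2 * int a * int b) * (x1^b * x0^a)"
  using qpow[OF R01] by simp
lemma R21p: "x2^a * x1^b = T (-2 * int a * int b) * (x1^b * x2^a)"
  using qpow[OF R21] by simp

lemma MR: "M i s j n * x0^q * x1^p = T (2 * int p * int (n+q) - 2 * int j * int p) * M i (s+p) j (n+q)"
proof -
  have "M i s j n * x0^q * x1^p = x3^i * x1^s * (x2^j * (x0^(n+q) * x1^p))"
    unfolding M_def by (simp add: power_add mult.assoc)
  also have "... = x3^i * x1^s * (x2^j * (T (2 * int (n+q) * int p) * (x1^p * x0^(n+q))))"
    by (simp only: R01p)
  also have "... = T (2 * int (n+q) * int p) * (x3^i * x1^s * ((x2^j * x1^p) * x0^(n+q)))"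
    by (simp only: T_leftXp mult.assoc)
  also have "... = T (2 * int (n+q) * int p) * (x3^i * x1^s * ((T (-2 * int j * int p) * (x1^p * x2^j)) * x0^(n+q)))"
    by (simp only: R21p)
  also have "... = T (2 * int (n+q) * int p + -2 * int j * int p) * (x3^i * (x1^s * x1^p) * x2^j * x0^(n+q))"
    by (simp only: T_leftXp mult.assoc T_add2)
  also have "2 * int (n+q) * int p + -2 * int j * int p = 2 * int p * int (n+q) - 2 * int j * int p"
    by (simp add: algebra_simps)
  also have "x3^i * (x1^s * x1^p) * x2^j * x0^(n+q) = M i (s+p) j (n+q)"
    unfolding M_def by (simp only: power_add)
  finally show ?thesis .
qed

lemma MulR01: "Lb d r1 r2 Z \<Longrightarrow> r1 \<le> 0 \<Longrightarrow> r2 \<le> 0 \<Longrightarrow>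
  Lb (d + int p * int q - int p * r2 - r1 * int q) r1 (r2 - int q) (Z * x0^q * x1^p)"
proof (induction rule: Lb.induct)
  case (Lb0 d r1 r2) thus ?case by (simp add: Lb.Lb0)
next
  case (Lb1 e d r1 a r2 b n)
  let ?i = "nat (pp (-a))" and ?s = "nat (pp a)" and ?j = "nat (pp b)" and ?n = "nat (pp (-b))"
  let ?E = "e - a*b + (2 * int p * int (?n+q) - 2 * int ?j * int p)"
  have eq: "(of_int n * T e * SE a b) * x0^q * x1^p = of_int n * (T ?E * M ?i (?s + p) ?j (?n + q))"
  proof -
    have "(of_int n * T e * SE a b) * x0^q * x1^p = of_int n * (T e * (T (-(a*b)) * (M ?i ?s ?j ?n * x0^q * x1^p)))"
      unfolding SE_eq by (simp only: mult.assoc)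
    also have "... = of_int n * (T ?E * M ?i (?s + p) ?j (?n + q))"
      by (simp only: MR T_add2 diff_conv_add_uminus add.assoc)
    finally show ?thesis .
  qed
  have W': "Lb ((int ?i - int (?s + p)) * (int (?n + q) - int ?j)) (- int ?i) (- int (?n + q)) (M ?i (?s + p) ?j (?n + q))"
    by (rule W)
  have k1: "int ?i - int ?s = - a" and k2: "int ?n - int ?j = -b"
    using pp_facts[of a] pp_facts[of b] by auto
  have gex: "\<And>I S N J. int I - int S = -a \<Longrightarrow> int N - int J = -b \<Longrightarrow>
      (int I - int (S + p)) * (int (N + q) - int J) = (-a - int p) * (int q - b)"
  proof -
    fix I S N J assume h: "int I - int S = -a" "int N - int J = -b"
    hence "int S = int I + a" "int J = int N + b" by linarith+
    thus "(int I - int (S + p)) * (int (N + q) - int J) = (-a - int p) * (int q - b)"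
      by (simp add: algebra_simps)
  qed
  have ex: "(int ?i - int (?s + p)) * (int (?n + q) - int ?j) = (-a - int p) * (int q - b)"
    by (rule gex[OF k1 k2])
  have s1: "r1 \<le> - int ?i" using Lb1 by (simp add: pp_def)
  have s2: "r2 - int q \<le> - int (?n + q)" using Lb1 by (simp add: pp_def)
  have W2: "Lb ((-a - int p) * (int q - b)) r1 (r2 - int q) (M ?i (?s + p) ?j (?n + q))"
    using Lb_mono[OF W' _ s1 s2] ex by simp
  have gE: "\<And>N J. int N - int J = -b \<Longrightarrow>
      e - a*b + (2 * int p * int (N+q) - 2 * int J * int p) = e - a*b + 2 * int p * (int q - b)"
  proof -
    fix N J assume h: "int N - int J = -b"
    hence "int J = int N + b" by linarith
    thus "e - a*b + (2 * int p * int (N+q) - 2 * int J * int p) = e - a*b + 2 * int p * (int q - b)"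
      by (simp add: algebra_simps)
  qed
  have Eeq: "?E = e - a*b + 2 * int p * (int q - b)" by (rule gE[OF k2])
  have m1: "r2 * int p \<le> b * int p" using Lb1 by (intro mult_right_mono) auto
  have m2: "r1 * int q \<le> a * int q" using Lb1 by (intro mult_right_mono) auto
  have bnd': "(-a - int p) * (int q - b) + ?E \<le> d + int p * int q - int p * r2 - r1 * int q"
    unfolding Eeq using Lb1 m1 m2 by (simp add: algebra_simps)
  have "Lb (d + int p * int q - int p * r2 - r1 * int q) r1 (r2 - int q) (T ?E * M ?i (?s + p) ?j (?n + q))"
    by (rule Lb_scale'[OF W2 bnd'])
  hence "Lb (d + int p * int q - int p * r2 - r1 * int q) r1 (r2 - int q) (of_int n * (T ?E * M ?i (?s + p) ?j (?n + q)))"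
    by (rule Lb_int)
  thus ?case unfolding eq .
next
  case (Lbadd d r1 r2 x y) thus ?case by (simp add: distrib_right Lb.Lbadd)
qed

end

context qca begin

lemma R43: "x4 * x3 = T (-2) * (x3 * x4)" by (simp add: R34 T_add2)
lemma R43p: "x4 * x3^i = T (-2 * int i) * (x3^i * x4)" using qpow[OF R43, of 1 i] by simp
lemma R23p: "x2 * x3^i = T (2 * int i) * (x3^i * x2)" using qpow[OF R23, of 1 i] by simp

lemma mon42: "x4 * (x3^i * x2^(Suc g)) = T (-2 * int i - 1) * (x3^(Suc i) * x2^g) + T (-2 * int i) * (x3^i * x2^g)"
proof -
  have "x4 * (x3^i * x2^(Suc g)) = T (-2 * int i) * (x3^i * ((x4 * x2) * x2^g))"
    by (simp only: mult.assoc[symmetric] R43p power_Suc; simp only: mult.assoc)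
  also have "... = T (-2 * int i) * (T (-1) * (x3^i * x3 * x2^g) + x3^i * x2^g)"
    by (simp only: E2r distrib_left distrib_right T_leftXp mult_1_left mult_1_right mult.assoc)
  also have "... = T (-2 * int i - 1) * (x3^(Suc i) * x2^g) + T (-2 * int i) * (x3^i * x2^g)"
    by (simp only: distrib_left T_add2 power_Suc2 mult.assoc diff_conv_add_uminus)
  finally show ?thesis .
qed

lemma mon42z: "x4 * (x3^i * x2^0) = T (-2 * int i) * (x3^i * x4^1)"
  by (simp add: R43p)

lemma mon44: "x4 * (x3^i * x4^g) = T (-2 * int i) * (x3^i * x4^(Suc g))"
  by (simp only: mult.assoc[symmetric] R43p power_Suc; simp only: mult.assoc)

lemma mon22: "x2 * (x3^i * x2^g) = T (2 * int i) * (x3^i * x2^(Suc g))"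
  by (simp only: mult.assoc[symmetric] R23p power_Suc; simp only: mult.assoc)

lemma mon24: "x2 * (x3^i * x4^(Suc g)) = T (2 * int i + 1) * (x3^(Suc i) * x4^g) + T (2 * int i) * (x3^i * x4^g)"
proof -
  have "x2 * (x3^i * x4^(Suc g)) = T (2 * int i) * (x3^i * ((x2 * x4) * x4^g))"
    by (simp only: mult.assoc[symmetric] R23p power_Suc; simp only: mult.assoc)
  also have "... = T (2 * int i) * (T 1 * (x3^i * x3 * x4^g) + x3^i * x4^g)"
    by (simp only: E2 distrib_left distrib_right T_leftXp mult_1_left mult_1_right mult.assoc)
  also have "... = T (2 * int i + 1) * (x3^(Suc i) * x4^g) + T (2 * int i) * (x3^i * x4^g)"
    by (simp only: distrib_left T_add2 power_Suc2 mult.assoc)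
  finally show ?thesis .
qed

lemma mon24z: "x2 * (x3^i * x4^0) = T (2 * int i) * (x3^i * x2^1)"
  by (simp add: R23p)

inductive Good1 :: "nat \<Rightarrow> nat \<Rightarrow> int \<Rightarrow> int \<Rightarrow> 'a \<Rightarrow> bool" for a where
  G0: "Good1 a m h B 0"
| G2: "s \<le> m \<Longrightarrow> h \<le> int g + int m \<Longrightarrow> e - int (a+s) * int g \<le> B \<Longrightarrow>
       Good1 a m h B (of_int n * T e * (x3^(a+s) * x2^g))"
| G4: "s + g \<le> m \<Longrightarrow> h \<le> int m - int g \<Longrightarrow> e + int (a+s) * int g \<le> B \<Longrightarrow>
       Good1 a m h B (of_int n * T e * (x3^(a+s) * x4^g))"
| Gadd: "Good1 a m h B x \<Longrightarrow> Good1 a m h B y \<Longrightarrow> Good1 a m h B (x + y)"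

lemma Good1_mono: "Good1 a m h B Z \<Longrightarrow> m \<le> m' \<Longrightarrow> h' \<le> h \<Longrightarrow> B \<le> B' \<Longrightarrow> Good1 a m' h' B' Z"
proof (induction rule: Good1.induct)
  case (G0 m h B) thus ?case by (simp add: Good1.G0)
next
  case (G2 s m h g e B n) thus ?case by (intro Good1.G2) auto
next
  case (G4 s g m h e B n) thus ?case by (intro Good1.G4) auto
next
  case (Gadd m h B x y) thus ?case by (simp add: Good1.Gadd)
qed

lemma coefT: "T k * (of_int n * T e * Y) = of_int n * T (k + e) * Y"
proof -
  have "T k * (of_int n * T e * Y) = (T k * of_int n) * (T e * Y)" by (simp only: mult.assoc)
  also have "... = (of_int n * T k) * (T e * Y)" by (simp only: T_comm)
  also have "... = of_int n * T (k + e) * Y" by (simp only: mult.assoc T_add2)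
  finally show ?thesis .
qed

lemma coefTx: "T k * (x * (of_int n * T e * Y)) = of_int n * T (k + e) * (x * Y)"
  by (simp only: coef_left[of x] coefT)

lemma coefI: "of_int c * (of_int n * T e * Y) = of_int (c * n) * T e * Y"
  by (simp add: mult.assoc)

lemma coefD: "of_int n * T e * (T k1 * Y1 + T k2 * Y2) = of_int n * T (e + k1) * Y1 + of_int n * T (e + k2) * Y2"
  by (simp only: distrib_left mult.assoc T_add2)

lemma Good1_scale: "Good1 a m h B Z \<Longrightarrow> Good1 a m h (B + k) (T k * Z)"
proof (induction rule: Good1.induct)
  case (G0 m h B) thus ?case by (simp add: Good1.G0)
next
  case (G2 s m h g e B n) thus ?case unfolding coefT by (intro Good1.G2) auto
next
  case (G4 s g m h e B n) thus ?case unfolding coefT by (intro Good1.G4) auto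
next
  case (Gadd m h B x y) thus ?case by (simp add: distrib_left Good1.Gadd)
qed

lemma Good1_int: "Good1 a m h B Z \<Longrightarrow> Good1 a m h B (of_int c * Z)"
proof (induction rule: Good1.induct)
  case (G0 m h B) thus ?case by (simp add: Good1.G0)
next
  case (G2 s m h g e B n) thus ?case unfolding coefI by (intro Good1.G2) auto
next
  case (G4 s g m h e B n) thus ?case unfolding coefI by (intro Good1.G4) auto
next
  case (Gadd m h B x y) thus ?case by (simp add: distrib_left Good1.Gadd)
qed

lemma G2I: "s \<le> m \<Longrightarrow> h \<le> int g + int m \<Longrightarrow> e - int (a+s) * int g \<le> B \<Longrightarrow>
       Z = of_int n * T e * (x3^(a+s) * x2^g) \<Longrightarrow> Good1 a m h B Z"
  using G2 by simp
lemma G4I: "s + g \<le> m \<Longrightarrow> h \<le> int m - int g \<Longrightarrow> e + int (a+s) * int g \<le> B \<Longrightarrow>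
       Z = of_int n * T e * (x3^(a+s) * x4^g) \<Longrightarrow> Good1 a m h B Z"
  using G4 by simp

lemma G1_X4: "Good1 a m h B Z \<Longrightarrow> Good1 a (Suc m) h (B + int a) (T (2 * int a) * (x4 * Z))"
proof (induction rule: Good1.induct)
  case (G0 m h B) thus ?case by (simp add: Good1.G0)
next
  case (G2 s m h g e B n)
  show ?case
  proof (cases g)
    case 0
    have "T (2 * int a) * (x4 * (of_int n * T e * (x3^(a+s) * x2^g))) = of_int n * T (2 * int a + e + -2 * int (a+s)) * (x3^(a+s) * x4^1)"
      unfolding coefTx 0 mon42z by (simp only: mult.assoc T_add2)
    thus ?thesis using G2 0 by (intro G4I[where s=s and g=1]) (auto simp: algebra_simps)
  next
    case (Suc g')
    have "T (2 * int a) * (x4 * (of_int n * T e * (x3^(a+s) * x2^g))) =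
      of_int n * T (2 * int a + e + (-2 * int (a+s) - 1)) * (x3^(a + Suc s) * x2^g') + of_int n * T (2 * int a + e + -2 * int (a+s)) * (x3^(a+s) * x2^g')"
      unfolding coefTx Suc mon42 coefD by simp
    moreover have "Good1 a (Suc m) h (B + int a) (of_int n * T (2 * int a + e + (-2 * int (a+s) - 1)) * (x3^(a + Suc s) * x2^g'))"
      using G2 Suc by (intro G2I[where s="Suc s" and g=g']) (auto simp: algebra_simps)
    moreover have "Good1 a (Suc m) h (B + int a) (of_int n * T (2 * int a + e + -2 * int (a+s)) * (x3^(a+s) * x2^g'))"
      using G2 Suc by (intro G2I[where s=s and g=g']) (auto simp: algebra_simps)
    ultimately show ?thesis by (simp add: Good1.Gadd)
  qed
next
  case (G4 s g m h e B n)
  have "T (2 * int a) * (x4 * (of_int n * T e * (x3^(a+s) * x4^g))) = of_int n * T (2 * int a + e + -2 * int (a+s)) * (x3^(a+s) * x4^(Suc g))"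
    unfolding coefTx mon44 by (simp only: mult.assoc T_add2)
  thus ?case using G4 by (intro G4I[where s=s and g="Suc g"]) (auto simp: algebra_simps)
next
  case (Gadd m h B x y) thus ?case by (simp add: distrib_left Good1.Gadd)
qed

lemma G1_X2: "Good1 a m h B Z \<Longrightarrow> Good1 a m (h + 1) (B - int a + int m) (T (-2 * int a) * (x2 * Z))"
proof (induction rule: Good1.induct)
  case (G0 m h B) thus ?case by (simp add: Good1.G0)
next
  case (G2 s m h g e B n)
  have "T (-2 * int a) * (x2 * (of_int n * T e * (x3^(a+s) * x2^g))) = of_int n * T (-2 * int a + e + 2 * int (a+s)) * (x3^(a+s) * x2^(Suc g))"
    unfolding coefTx mon22 by (simp only: mult.assoc T_add2)
  thus ?case using G2 by (intro G2I[where s=s and g="Suc g"]) (auto simp: algebra_simps)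
next
  case (G4 s g m h e B n)
  show ?case
  proof (cases g)
    case 0
    have "T (-2 * int a) * (x2 * (of_int n * T e * (x3^(a+s) * x4^g))) = of_int n * T (-2 * int a + e + 2 * int (a+s)) * (x3^(a+s) * x2^1)"
      unfolding coefTx 0 mon24z by (simp only: mult.assoc T_add2)
    thus ?thesis using G4 0 by (intro G2I[where s=s and g=1]) (auto simp: algebra_simps)
  next
    case (Suc g')
    have "T (-2 * int a) * (x2 * (of_int n * T e * (x3^(a+s) * x4^g))) =
      of_int n * T (-2 * int a + e + (2 * int (a+s) + 1)) * (x3^(a + Suc s) * x4^g') + of_int n * T (-2 * int a + e + 2 * int (a+s)) * (x3^(a+s) * x4^g')"
      unfolding coefTx Suc mon24 coefD by simp
    moreover have "Good1 a m (h + 1) (B - int a + int m) (of_int n * T (-2 * int a + e + (2 * int (a+s) + 1)) * (x3^(a + Suc s) * x4^g'))"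
      using G4 Suc by (intro G4I[where s="Suc s" and g=g']) (auto simp: algebra_simps)
    moreover have "Good1 a m (h + 1) (B - int a + int m) (of_int n * T (-2 * int a + e + 2 * int (a+s)) * (x3^(a+s) * x4^g'))"
      using G4 Suc by (intro G4I[where s=s and g=g']) (auto simp: algebra_simps)
    ultimately show ?thesis by (simp add: Good1.Gadd)
  qed
next
  case (Gadd m h B x y) thus ?case by (simp add: distrib_left Good1.Gadd)
qed

end

context qca begin

lemma R32: "x3 * x2 = T (-2) * (x2 * x3)" by (simp add: R23 T_add2)
lemma R34p: "x3^i * x4 = T (2 * int i) * (x4 * x3^i)" using qpow[OF R34, of i 1] by simp
lemma R32p: "x3^i * x2^3 = T (-6 * int i) * (x2^3 * x3^i)" using qpow[OF R32, of i 3] by simp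

definition F1 :: "nat \<Rightarrow> 'a" where "F1 j = T (- (int j * int j)) * (x3^j * x0^j)"

lemma F1_0: "F1 0 = 1" by (simp add: F1_def)

lemma F1_rec: "F1 (Suc j) = (x4 + T (-8 * int j - 4) * x2^3) * F1 j"
proof -
  have "F1 (Suc j) = T (- ((int j + 1) * (int j + 1))) * (x3^j * (x3 * x0) * x0^j)"
    unfolding F1_def by (simp only: power_Suc2[of x3 j] power_Suc[of x0 j] of_nat_Suc add.commute[of 1] mult.assoc)
  also have "... = T (- (int j * int j)) * (x4 * (x3^j * x0^j)) + T (- (int j * int j) + (-8 * int j - 4)) * (x2^3 * (x3^j * x0^j))"
  proof -
    have e1: "- ((int j + 1) * (int j + 1)) + (1 + 2 * int j) = - (int j * int j)" by (simp add: algebra_simps)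
    have e2: "- ((int j + 1) * (int j + 1)) + (-3 + -6 * int j) = - (int j * int j) + (-8 * int j - 4)" by (simp add: algebra_simps)
    have R34pa: "x3^j * (x4 * y) = T (2 * int j) * (x4 * (x3^j * y))" for y
      by (simp only: mult.assoc[symmetric] R34p; simp only: mult.assoc)
    have R32pa: "x3^j * (x2^3 * y) = T (-6 * int j) * (x2^3 * (x3^j * y))" for y
      by (simp only: mult.assoc[symmetric] R32p; simp only: mult.assoc)
    show ?thesis apply (simp only: E30 distrib_left distrib_right mult.assoc T_leftXp T_leftX R34pa R32pa T_add2)
      apply (rule arg_cong2[where f="(+)"]; rule arg_cong[where f="\<lambda>e. T e * _"])
      by (simp_all add: algebra_simps)
  qed
  also have "... = (x4 + T (-8 * int j - 4) * x2^3) * F1 j"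
    unfolding F1_def by (simp only: distrib_right mult.assoc T_leftX T_leftXp T_add2 add.commute[of "- (int j * int j)"])
  finally show ?thesis .
qed

definition D1 :: "nat \<Rightarrow> 'a" where "D1 j = F1 j - x4^j"

lemma D1_rec: "D1 (Suc j) = x4 * D1 j + T (-8 * int j - 4) * (x2^3 * x4^j) + T (-8 * int j - 4) * (x2^3 * D1 j)"
  unfolding D1_def F1_rec by (simp add: algebra_simps)

lemma x2_3: "x2^3 * Z = x2 * (x2 * (x2 * Z))"
  by (simp add: numeral_3_eq_3 mult.assoc)

lemma G1_X2_3: "Good1 a m h B Z \<Longrightarrow> Good1 a m (h + 3) (B - 3 * int a + 3 * int m) (T (-6 * int a) * (x2^3 * Z))"
proof -
  assume g: "Good1 a m h B Z"
  have "Good1 a m (h + 1 + 1 + 1) (B - int a + int m - int a + int m - int a + int m)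
     (T (-2 * int a) * (x2 * (T (-2 * int a) * (x2 * (T (-2 * int a) * (x2 * Z))))))"
    by (intro G1_X2 g)
  moreover have "T (-2 * int a) * (x2 * (T (-2 * int a) * (x2 * (T (-2 * int a) * (x2 * Z))))) = T (-6 * int a) * (x2^3 * Z)"
    unfolding x2_3 by (simp only: T_leftX T_add2) simp
  ultimately show ?thesis by (simp add: algebra_simps)
qed

lemma x3a_x4: "x3^a * (x4 * Z) = T (2 * int a) * (x4 * (x3^a * Z))"
  by (simp only: mult.assoc[symmetric] R34p; simp only: mult.assoc)
lemma x3a_x23: "x3^a * (x2^3 * Z) = T (-6 * int a) * (x2^3 * (x3^a * Z))"
  by (simp only: mult.assoc[symmetric] R32p; simp only: mult.assoc)

lemma Good_D1: "Good1 a j 0 (int a * int (Suc j) - 4) (x3^a * D1 (Suc j))"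
proof (induction j)
  case 0
  have "x3^a * D1 (Suc 0) = of_int 1 * T (-4) * (x3^(a+0) * x2^3)"
    unfolding D1_def F1_rec F1_0 by (simp add: T_leftXp algebra_simps)
  thus ?case by (intro G2I[where s=0 and g=3 and n=1 and e="-4"]) auto
next
  case (Suc j)
  let ?c = "-8 * int (Suc j) - 4"
  have eq: "x3^a * D1 (Suc (Suc j)) = T (2 * int a) * (x4 * (x3^a * D1 (Suc j)))
     + T ?c * (T (-6 * int a) * (x2^3 * (x3^a * x4^(Suc j))))
     + T ?c * (T (-6 * int a) * (x2^3 * (x3^a * D1 (Suc j))))"
    by (simp only: D1_rec[of "Suc j"] distrib_left T_leftXp x3a_x4 x3a_x23)
  have t1: "Good1 a (Suc j) 0 (int a * int (Suc (Suc j)) - 4) (T (2 * int a) * (x4 * (x3^a * D1 (Suc j))))"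
    using G1_X4[OF Suc.IH] by (rule Good1_mono) (auto simp: algebra_simps)
  have m0: "Good1 a (Suc j) 0 (int a * int (Suc j)) (x3^a * x4^(Suc j))"
    by (rule G4I[where s=0 and g="Suc j" and n=1 and e=0]) auto
  have t2: "Good1 a (Suc j) 0 (int a * int (Suc (Suc j)) - 4) (T ?c * (T (-6 * int a) * (x2^3 * (x3^a * x4^(Suc j)))))"
    using Good1_scale[OF G1_X2_3[OF m0], of ?c] by (rule Good1_mono) (auto simp: algebra_simps)
  have t3: "Good1 a (Suc j) 0 (int a * int (Suc (Suc j)) - 4) (T ?c * (T (-6 * int a) * (x2^3 * (x3^a * D1 (Suc j)))))"
    using Good1_scale[OF G1_X2_3[OF Suc.IH], of ?c] by (rule Good1_mono) (auto simp: algebra_simps)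
  show ?case unfolding eq using t1 t2 t3 by (intro Gadd)
qed

end

context qca begin

lemma SE_np: "SE (- int i) (int g) = T (int i * int g) * (x3^i * x2^g)"
  by (simp add: stdE_def pp_def mult.assoc)
lemma SE_nn: "SE (- int i) (- int n) = T (- (int i * int n)) * (x3^i * x0^n)"
  by (simp add: stdE_def pp_def mult.assoc)
lemma SE_pp: "SE (int s) (int g) = T (- (int s * int g)) * (x1^s * x2^g)"
  by (simp add: stdE_def pp_def mult.assoc)
lemma SE_pn: "SE (int s) (- int n) = T (int s * int n) * (x1^s * x0^n)"
  by (simp add: stdE_def pp_def mult.assoc)

lemma mono32: "x3^i * x2^g = T (- (int i * int g)) * SE (- int i) (int g)"
  by (simp add: SE_np T_add2)
lemma mono30: "x3^i * x0^n = T (int i * int n) * SE (- int i) (- int n)"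
  by (simp add: SE_nn T_add2)
lemma mono12: "x1^s * x2^g = T (int s * int g) * SE (int s) (int g)"
  by (simp add: SE_pp T_add2)
lemma mono10: "x1^s * x0^n = T (- (int s * int n)) * SE (int s) (- int n)"
  by (simp add: SE_pn T_add2)

lemma conv1: "Good1 a m h B Z \<Longrightarrow>
  (\<And>g a'. g \<le> m \<Longrightarrow> Lb (int a' * int g) (-(int a' + int g)) (- int g) (x3^a' * x4^g)) \<Longrightarrow>
  Lb B (-(int a + int m)) (- int m) Z"
proof (induction rule: Good1.induct)
  case (G0 m h B) thus ?case by (simp add: Lb0)
next
  case (G2 s m h g e B n)
  have "of_int n * T e * (x3^(a+s) * x2^g) = of_int n * T (e + - (int (a+s) * int g)) * SE (- int (a+s)) (int g)"
    by (simp only: mono32 mult.assoc T_add2)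
  moreover have "Lb B (-(int a + int m)) (- int m) (of_int n * T (e + - (int (a+s) * int g)) * SE (- int (a+s)) (int g))"
    using G2 by (intro Lb1) auto
  ultimately show ?case by simp
next
  case (G4 s g m h e B n)
  have "Lb (int (a+s) * int g) (-(int (a+s) + int g)) (- int g) (x3^(a+s) * x4^g)"
    using G4.prems[of g "a+s"] G4.hyps(1) by simp
  hence "Lb (int (a+s) * int g + e) (-(int (a+s) + int g)) (- int g) (T e * (x3^(a+s) * x4^g))"
    by (rule Lb_scale)
  hence "Lb (int (a+s) * int g + e) (-(int (a+s) + int g)) (- int g) (of_int n * (T e * (x3^(a+s) * x4^g)))"
    by (rule Lb_int)
  hence "Lb B (-(int a + int m)) (- int m) (of_int n * (T e * (x3^(a+s) * x4^g)))"
    by (rule Lb_mono) (use G4 in auto)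
  thus ?case by (simp only: mult.assoc)
next
  case (Gadd m h B x y) thus ?case by (simp add: Lbadd)
qed

lemma x3F1: "x3^a * F1 c = T (int a * int c) * SE (- (int a + int c)) (- int c)"
proof -
  have "x3^a * F1 c = T (- (int c * int c)) * (x3^(a+c) * x0^c)"
    unfolding F1_def by (simp only: T_leftXp power_add mult.assoc)
  also have "... = T (- (int c * int c) + int (a+c) * int c) * SE (- int (a+c)) (- int c)"
    by (simp only: mono30 T_add2)
  also have "- (int c * int c) + int (a+c) * int c = int a * int c" by (simp add: algebra_simps)
  finally show ?thesis by simp
qed

lemma PP: "Lb (int a * int c - 1) (-(int a + int c)) (- int c) (x3^a * x4^c - T (int a * int c) * SE (-(int a + int c)) (- int c))
   \<and> Lb (int a * int c) (-(int a + int c)) (- int c) (x3^a * x4^c)"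
proof (induction c arbitrary: a rule: less_induct)
  case (less c)
  have main: "Lb (int a * int c - 1) (-(int a + int c)) (- int c) (x3^a * x4^c - T (int a * int c) * SE (-(int a + int c)) (- int c))"
  proof (cases c)
    case 0
    thus ?thesis using x3F1[of a 0] by (simp add: F1_0 Lb0)
  next
    case (Suc j)
    have "x3^a * x4^c - T (int a * int c) * SE (-(int a + int c)) (- int c) = - (x3^a * D1 (Suc j))"
      unfolding x3F1[symmetric] Suc D1_def by (simp add: algebra_simps)
    moreover have "Lb (int a * int (Suc j) - 4) (-(int a + int j)) (- int j) (x3^a * D1 (Suc j))"
      using conv1[OF Good_D1] less Suc by force
    ultimately show ?thesis using Suc by (auto intro!: Lb_neg elim!: Lb_mono)
  qed
  moreover have "Lb (int a * int c) (-(int a + int c)) (- int c) (T (int a * int c) * SE (-(int a + int c)) (- int c))"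
    by (rule Lb_single) auto
  ultimately have "Lb (int a * int c) (-(int a + int c)) (- int c)
     ((x3^a * x4^c - T (int a * int c) * SE (-(int a + int c)) (- int c)) + T (int a * int c) * SE (-(int a + int c)) (- int c))"
    by (intro Lbadd) (auto elim: Lb_mono)
  thus ?case using main by simp
qed

end

context qca begin

lemma R10: "x1 * x0 = T (-2) * (x0 * x1)" by (simp add: R01 T_add2)
lemma R10p: "x1^i * x0 = T (-2 * int i) * (x0 * x1^i)" using qpow[OF R10, of i 1] by simp
lemma R12p1: "x1^i * x2 = T (2 * int i) * (x2 * x1^i)" using qpow[OF R12', of i 1] by simp

lemma m20: "x2^(Suc g) * x1^i * x0 = T (-2 * int i - 1) * (x2^g * x1^(Suc i)) + T (-2 * int i) * (x2^g * x1^i)"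
proof -
  have "x2^(Suc g) * x1^i * x0 = T (-2 * int i) * (x2^g * (x2 * x0) * x1^i)"
    by (simp only: mult.assoc R10p power_Suc2 T_leftXp T_leftX)
  also have "... = T (-2 * int i) * (T (-1) * (x2^g * (x1 * x1^i)) + x2^g * x1^i)"
    by (simp only: E0r distrib_left distrib_right T_leftXp mult_1_left mult_1_right mult.assoc)
  also have "... = T (-2 * int i - 1) * (x2^g * x1^(Suc i)) + T (-2 * int i) * (x2^g * x1^i)"
    by (simp only: distrib_left T_add2 power_Suc mult.assoc diff_conv_add_uminus)
  finally show ?thesis .
qed

lemma m20z: "x2^0 * x1^i * x0 = T (-2 * int i) * (x0^1 * x1^i)"
  by (simp add: R10p)

lemma m00: "x0^g * x1^i * x0 = T (-2 * int i) * (x0^(Suc g) * x1^i)"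
  by (simp only: mult.assoc R10p T_leftXp; simp only: power_Suc2 mult.assoc)

lemma m22: "x2^g * x1^i * x2 = T (2 * int i) * (x2^(Suc g) * x1^i)"
  by (simp only: mult.assoc R12p1 T_leftXp; simp only: power_Suc2 mult.assoc)

lemma m02: "x0^(Suc g) * x1^i * x2 = T (2 * int i + 1) * (x0^g * x1^(Suc i)) + T (2 * int i) * (x0^g * x1^i)"
proof -
  have "x0^(Suc g) * x1^i * x2 = T (2 * int i) * (x0^g * (x0 * x2) * x1^i)"
    by (simp only: mult.assoc R12p1 power_Suc2 T_leftXp T_leftX)
  also have "... = T (2 * int i) * (T 1 * (x0^g * (x1 * x1^i)) + x0^g * x1^i)"
    by (simp only: E0 distrib_left distrib_right T_leftXp mult_1_left mult_1_right mult.assoc)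
  also have "... = T (2 * int i + 1) * (x0^g * x1^(Suc i)) + T (2 * int i) * (x0^g * x1^i)"
    by (simp only: distrib_left T_add2 power_Suc mult.assoc)
  finally show ?thesis .
qed

lemma m02z: "x0^0 * x1^i * x2 = T (2 * int i) * (x2^1 * x1^i)"
  by (simp add: R12p1)

inductive Good2 :: "nat \<Rightarrow> nat \<Rightarrow> int \<Rightarrow> int \<Rightarrow> 'a \<Rightarrow> bool" for k where
  H0: "Good2 k m h B 0"
| H2: "s \<le> m \<Longrightarrow> h \<le> int g + int m \<Longrightarrow> e - int (k+s) * int g \<le> B \<Longrightarrow>
       Good2 k m h B (of_int n * T e * (x2^g * x1^(k+s)))"
| H4: "s + g \<le> m \<Longrightarrow> h \<le> int m - int g \<Longrightarrow> e + int (k+s) * int g \<le> B \<Longrightarrow>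
       Good2 k m h B (of_int n * T e * (x0^g * x1^(k+s)))"
| Hadd: "Good2 k m h B x \<Longrightarrow> Good2 k m h B y \<Longrightarrow> Good2 k m h B (x + y)"

lemma Good2_mono: "Good2 k m h B Z \<Longrightarrow> m \<le> m' \<Longrightarrow> h' \<le> h \<Longrightarrow> B \<le> B' \<Longrightarrow> Good2 k m' h' B' Z"
proof (induction rule: Good2.induct)
  case (H0 m h B) thus ?case by (simp add: Good2.H0)
next
  case (H2 s m h g e B n) thus ?case by (intro Good2.H2) auto
next
  case (H4 s g m h e B n) thus ?case by (intro Good2.H4) auto
next
  case (Hadd m h B x y) thus ?case by (simp add: Good2.Hadd)
qed

lemma Good2_scale: "Good2 k m h B Z \<Longrightarrow> Good2 k m h (B + c) (T c * Z)"
proof (induction rule: Good2.induct)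
  case (H0 m h B) thus ?case by (simp add: Good2.H0)
next
  case (H2 s m h g e B n) thus ?case unfolding coefT by (intro Good2.H2) auto
next
  case (H4 s g m h e B n) thus ?case unfolding coefT by (intro Good2.H4) auto
next
  case (Hadd m h B x y) thus ?case by (simp add: distrib_left Good2.Hadd)
qed

lemma H2I: "s \<le> m \<Longrightarrow> h \<le> int g + int m \<Longrightarrow> e - int (k+s) * int g \<le> B \<Longrightarrow>
       Z = of_int n * T e * (x2^g * x1^(k+s)) \<Longrightarrow> Good2 k m h B Z"
  using H2 by simp
lemma H4I: "s + g \<le> m \<Longrightarrow> h \<le> int m - int g \<Longrightarrow> e + int (k+s) * int g \<le> B \<Longrightarrow>
       Z = of_int n * T e * (x0^g * x1^(k+s)) \<Longrightarrow> Good2 k m h B Z"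
  using H4 by simp

lemma coefTr: "T c * ((of_int n * T e * Y) * x) = of_int n * T (c + e) * (Y * x)"
  by (simp only: mult.assoc[of "of_int n * T e"] coefT)

lemma G2_X0: "Good2 k m h B Z \<Longrightarrow> Good2 k (Suc m) h (B + int k) (T (2 * int k) * (Z * x0))"
proof (induction rule: Good2.induct)
  case (H0 m h B) thus ?case by (simp add: Good2.H0)
next
  case (H2 s m h g e B n)
  show ?case
  proof (cases g)
    case 0
    have "T (2 * int k) * (of_int n * T e * (x2^g * x1^(k+s)) * x0) = of_int n * T (2 * int k + e + -2 * int (k+s)) * (x0^1 * x1^(k+s))"
      unfolding coefTr 0 m20z by (simp only: mult.assoc T_add2)
    thus ?thesis using H2 0 by (intro H4I[where s=s and g=1]) (auto simp: algebra_simps)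
  next
    case (Suc g')
    have "T (2 * int k) * (of_int n * T e * (x2^g * x1^(k+s)) * x0) =
      of_int n * T (2 * int k + e + (-2 * int (k+s) - 1)) * (x2^g' * x1^(k + Suc s)) + of_int n * T (2 * int k + e + -2 * int (k+s)) * (x2^g' * x1^(k+s))"
      unfolding coefTr Suc m20 coefD by simp
    moreover have "Good2 k (Suc m) h (B + int k) (of_int n * T (2 * int k + e + (-2 * int (k+s) - 1)) * (x2^g' * x1^(k + Suc s)))"
      using H2 Suc by (intro H2I[where s="Suc s" and g=g']) (auto simp: algebra_simps)
    moreover have "Good2 k (Suc m) h (B + int k) (of_int n * T (2 * int k + e + -2 * int (k+s)) * (x2^g' * x1^(k+s)))"
      using H2 Suc by (intro H2I[where s=s and g=g']) (auto simp: algebra_simps)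
    ultimately show ?thesis by (simp add: Good2.Hadd)
  qed
next
  case (H4 s g m h e B n)
  have "T (2 * int k) * (of_int n * T e * (x0^g * x1^(k+s)) * x0) = of_int n * T (2 * int k + e + -2 * int (k+s)) * (x0^(Suc g) * x1^(k+s))"
    unfolding coefTr m00 by (simp only: mult.assoc T_add2)
  thus ?case using H4 by (intro H4I[where s=s and g="Suc g"]) (auto simp: algebra_simps)
next
  case (Hadd m h B x y) thus ?case by (simp add: distrib_left distrib_right Good2.Hadd)
qed

lemma G2_X2: "Good2 k m h B Z \<Longrightarrow> Good2 k m (h + 1) (B - int k + int m) (T (-2 * int k) * (Z * x2))"
proof (induction rule: Good2.induct)
  case (H0 m h B) thus ?case by (simp add: Good2.H0)
next
  case (H2 s m h g e B n)
  have "T (-2 * int k) * (of_int n * T e * (x2^g * x1^(k+s)) * x2) = of_int n * T (-2 * int k + e + 2 * int (k+s)) * (x2^(Suc g) * x1^(k+s))"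
    unfolding coefTr m22 by (simp only: mult.assoc T_add2)
  thus ?case using H2 by (intro H2I[where s=s and g="Suc g"]) (auto simp: algebra_simps)
next
  case (H4 s g m h e B n)
  show ?case
  proof (cases g)
    case 0
    have "T (-2 * int k) * (of_int n * T e * (x0^g * x1^(k+s)) * x2) = of_int n * T (-2 * int k + e + 2 * int (k+s)) * (x2^1 * x1^(k+s))"
      unfolding coefTr 0 m02z by (simp only: mult.assoc T_add2)
    thus ?thesis using H4 0 by (intro H2I[where s=s and g=1]) (auto simp: algebra_simps)
  next
    case (Suc g')
    have "T (-2 * int k) * (of_int n * T e * (x0^g * x1^(k+s)) * x2) =
      of_int n * T (-2 * int k + e + (2 * int (k+s) + 1)) * (x0^g' * x1^(k + Suc s)) + of_int n * T (-2 * int k + e + 2 * int (k+s)) * (x0^g' * x1^(k+s))"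
      unfolding coefTr Suc m02 coefD by simp
    moreover have "Good2 k m (h + 1) (B - int k + int m) (of_int n * T (-2 * int k + e + (2 * int (k+s) + 1)) * (x0^g' * x1^(k + Suc s)))"
      using H4 Suc by (intro H4I[where s="Suc s" and g=g']) (auto simp: algebra_simps)
    moreover have "Good2 k m (h + 1) (B - int k + int m) (of_int n * T (-2 * int k + e + 2 * int (k+s)) * (x0^g' * x1^(k+s)))"
      using H4 Suc by (intro H4I[where s=s and g=g']) (auto simp: algebra_simps)
    ultimately show ?thesis by (simp add: Good2.Hadd)
  qed
next
  case (Hadd m h B x y) thus ?case by (simp add: distrib_left distrib_right Good2.Hadd)
qed

end

context qca begin

lemma R01j: "x0 * x1^j = T (2 * int j) * (x1^j * x0)" using R01p[of 1 j] by simp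
lemma R21j3: "x2^3 * x1^j = T (-6 * int j) * (x1^j * x2^3)" using R21p[of 3 j] by simp

definition G2f :: "nat \<Rightarrow> 'a" where "G2f j = T (- (int j * int j)) * (x4^j * x1^j)"

lemma G2f_0: "G2f 0 = 1" by (simp add: G2f_def)

lemma G2f_rec: "G2f (Suc j) = G2f j * (x0 + T (-8 * int j - 4) * x2^3)"
proof -
  have "G2f (Suc j) = T (- ((int j + 1) * (int j + 1))) * (x4^j * (x4 * x1) * x1^j)"
    unfolding G2f_def by (simp only: power_Suc2[of x4 j] power_Suc[of x1 j] of_nat_Suc add.commute[of 1] mult.assoc)
  also have "... = G2f j * (x0 + T (-8 * int j - 4) * x2^3)"
    unfolding G2f_def
    apply (simp only: E41 distrib_left distrib_right mult.assoc T_leftXp T_leftX R01j R21j3 T_add2)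
    apply (rule arg_cong2[where f="(+)"]; rule arg_cong[where f="\<lambda>e. T e * _"])
    by (simp_all add: algebra_simps)
  finally show ?thesis .
qed

definition D2f :: "nat \<Rightarrow> 'a" where "D2f j = G2f j - x0^j"

lemma D2f_rec: "D2f (Suc j) = D2f j * x0 + T (-8 * int j - 4) * (x0^j * x2^3) + T (-8 * int j - 4) * (D2f j * x2^3)"
proof -
  have "D2f (Suc j) = (D2f j + x0^j) * (x0 + T (-8 * int j - 4) * x2^3) - x0^j * x0"
    unfolding D2f_def G2f_rec by (simp add: power_commutes)
  also have "... = D2f j * x0 + T (-8 * int j - 4) * (x0^j * x2^3) + T (-8 * int j - 4) * (D2f j * x2^3)"
    by (simp add: distrib_left distrib_right T_left[of "D2f j"] T_left[of "x0^j"] algebra_simps)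
  finally show ?thesis .
qed

lemma Z_x2_3: "Z * x2^3 = Z * x2 * x2 * x2"
  by (simp add: numeral_3_eq_3 mult.assoc)

lemma G2_X2_3: "Good2 k m h B Z \<Longrightarrow> Good2 k m (h + 3) (B - 3 * int k + 3 * int m) (T (-6 * int k) * (Z * x2^3))"
proof -
  assume g: "Good2 k m h B Z"
  have "Good2 k m (h + 1 + 1 + 1) (B - int k + int m - int k + int m - int k + int m)
     (T (-2 * int k) * ((T (-2 * int k) * ((T (-2 * int k) * (Z * x2)) * x2)) * x2))"
    by (intro G2_X2 g)
  moreover have "T (-2 * int k) * ((T (-2 * int k) * ((T (-2 * int k) * (Z * x2)) * x2)) * x2) = T (-6 * int k) * (Z * x2^3)"
    unfolding Z_x2_3 by (simp only: mult.assoc T_add2) simp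
  ultimately show ?thesis by (simp add: algebra_simps)
qed

lemma Zx0x1: "Z * x0 * x1^k = T (2 * int k) * (Z * x1^k * x0)"
  by (simp only: mult.assoc R01j T_left[of Z])
lemma Zx23x1: "Z * x2^3 * x1^k = T (-6 * int k) * (Z * x1^k * x2^3)"
  by (simp only: mult.assoc R21j3 T_left[of Z])

lemma Good_D2: "Good2 k j 0 (int k * int (Suc j) - 4) (D2f (Suc j) * x1^k)"
proof (induction j)
  case 0
  have "D2f (Suc 0) * x1^k = of_int 1 * T (-4) * (x2^3 * x1^(k+0))"
    unfolding D2f_def G2f_rec G2f_0 by (simp add: algebra_simps)
  thus ?case by (intro H2I[where s=0 and g=3 and n=1 and e="-4"]) auto
next
  case (Suc j)
  let ?c = "-8 * int (Suc j) - 4"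
  have eq: "D2f (Suc (Suc j)) * x1^k = T (2 * int k) * (D2f (Suc j) * x1^k * x0)
     + T ?c * (T (-6 * int k) * (x0^(Suc j) * x1^k * x2^3))
     + T ?c * (T (-6 * int k) * (D2f (Suc j) * x1^k * x2^3))"
  proof -
    have "D2f (Suc (Suc j)) * x1^k = D2f (Suc j) * x0 * x1^k + T ?c * (x0^(Suc j) * x2^3 * x1^k) + T ?c * (D2f (Suc j) * x2^3 * x1^k)"
      by (simp only: D2f_rec[of "Suc j"] distrib_right mult.assoc)
    thus ?thesis by (simp only: Zx0x1 Zx23x1)
  qed
  have t1: "Good2 k (Suc j) 0 (int k * int (Suc (Suc j)) - 4) (T (2 * int k) * (D2f (Suc j) * x1^k * x0))"
    using G2_X0[OF Suc.IH] by (rule Good2_mono) (auto simp: algebra_simps)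
  have m0: "Good2 k (Suc j) 0 (int k * int (Suc j)) (x0^(Suc j) * x1^k)"
    by (rule H4I[where s=0 and g="Suc j" and n=1 and e=0]) auto
  have t2: "Good2 k (Suc j) 0 (int k * int (Suc (Suc j)) - 4) (T ?c * (T (-6 * int k) * (x0^(Suc j) * x1^k * x2^3)))"
    using Good2_scale[OF G2_X2_3[OF m0], of ?c] by (rule Good2_mono) (auto simp: algebra_simps)
  have t3: "Good2 k (Suc j) 0 (int k * int (Suc (Suc j)) - 4) (T ?c * (T (-6 * int k) * (D2f (Suc j) * x1^k * x2^3)))"
    using Good2_scale[OF G2_X2_3[OF Suc.IH], of ?c] by (rule Good2_mono) (auto simp: algebra_simps)
  show ?case unfolding eq using t1 t2 t3 by (intro Hadd)
qed

lemma mono21: "x2^g * x1^i = T (- (int i * int g)) * SE (int i) (int g)"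
  by (simp add: SE_pp R21p T_add2 algebra_simps)
lemma mono01: "x0^g * x1^i = T (int i * int g) * SE (int i) (- int g)"
  by (simp add: SE_pn R01p T_add2 algebra_simps)

lemma conv2: "Good2 k m h B Z \<Longrightarrow> Lb B 0 (- int m) Z"
proof (induction rule: Good2.induct)
  case (H0 m h B) thus ?case by (simp add: Lb0)
next
  case (H2 s m h g e B n)
  have "of_int n * T e * (x2^g * x1^(k+s)) = of_int n * T (e + - (int (k+s) * int g)) * SE (int (k+s)) (int g)"
    by (simp only: mono21 mult.assoc T_add2)
  moreover have "Lb B 0 (- int m) (of_int n * T (e + - (int (k+s) * int g)) * SE (int (k+s)) (int g))"
    using H2 by (intro Lb1) auto
  ultimately show ?case by simp
next
  case (H4 s g m h e B n)
  have "of_int n * T e * (x0^g * x1^(k+s)) = of_int n * T (e + int (k+s) * int g) * SE (int (k+s)) (- int g)"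
    by (simp only: mono01 mult.assoc T_add2)
  moreover have "Lb B 0 (- int m) (of_int n * T (e + int (k+s) * int g) * SE (int (k+s)) (- int g))"
    using H4 by (intro Lb1) auto
  ultimately show ?case by simp
next
  case (Hadd m h B x y) thus ?case by (simp add: Lbadd)
qed

end

context qca begin

definition LbE :: "int \<Rightarrow> int \<Rightarrow> 'a \<Rightarrow> bool" where "LbE d r2 Z \<longleftrightarrow> (\<exists>r1. Lb d r1 r2 Z)"

lemma LbE_I: "Lb d r1 r2 Z \<Longrightarrow> LbE d r2 Z" unfolding LbE_def by blast
lemma LbE_add: "LbE d r2 x \<Longrightarrow> LbE d r2 y \<Longrightarrow> LbE d r2 (x + y)"
  unfolding LbE_def by (meson Lb_mono Lbadd min.cobounded1 min.cobounded2 order_refl)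
lemma LbE_mono: "LbE d r2 x \<Longrightarrow> d \<le> d' \<Longrightarrow> r2' \<le> r2 \<Longrightarrow> LbE d' r2' x"
  unfolding LbE_def using Lb_mono by blast
lemma LbE_scale: "LbE d r2 x \<Longrightarrow> d + k \<le> d' \<Longrightarrow> LbE d' r2 (T k * x)"
  unfolding LbE_def using Lb_scale' by blast
lemma LbE_int: "LbE d r2 x \<Longrightarrow> LbE d r2 (of_int c * x)"
  unfolding LbE_def using Lb_int by blast
lemma LbE_diff: "LbE d r2 x \<Longrightarrow> LbE d r2 y \<Longrightarrow> LbE d r2 (x - y)"
  unfolding LbE_def by (meson Lb_diff Lb_mono min.cobounded1 min.cobounded2 order_refl)

lemma x3x2M: "x3^s * x2^g = M s 0 g 0" by (simp add: M_def)

lemma G1R01: "Good1 0 m h B Z \<Longrightarrow>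
  (\<And>g a'. g \<le> m \<Longrightarrow> Lb (int a' * int g) (-(int a' + int g)) (- int g) (x3^a' * x4^g)) \<Longrightarrow>
  Lb (B + int r * int q + int r * int m + int m * int q) (- int m) (-(int m + int q)) (Z * x0^q * x1^r)"
proof (induction rule: Good1.induct)
  case (G0 m h B) thus ?case by (simp add: Lb0)
next
  case (G2 s m h g e B n)
  have eq: "of_int n * T e * (x3^(0+s) * x2^g) * x0^q * x1^r = of_int n * (T (e + (2 * int r * int (0+q) - 2 * int g * int r)) * M s r g q)"
    by (simp only: x3x2M mult.assoc[of "of_int n * T e"] add_0 MR) (simp only: mult.assoc T_add2)
  have Wm: "Lb ((int s - int r) * (int q - int g)) (- int s) (- int q) (M s r g q)" using W[of s r q g] by simp
  have sq: "int s * int q \<le> int m * int q" using G2 by (intro mult_right_mono) auto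
  have bnd: "(int s - int r) * (int q - int g) + (e + (2 * int r * int (0+q) - 2 * int g * int r)) \<le> B + int r * int q + int r * int m + int m * int q"
  proof -
    have ex: "(int s - int r) * (int q - int g) + (e + (2 * int r * int (0+q) - 2 * int g * int r)) =
      e - int s * int g + int s * int q + int r * int q - int r * int g" by (simp add: algebra_simps)
    have "0 \<le> int r * int g" "0 \<le> int r * int m" by simp_all
    moreover have "e - int s * int g \<le> B" using G2 by simp
    ultimately show ?thesis unfolding ex using sq by linarith
  qed
  have "Lb (B + int r * int q + int r * int m + int m * int q) (- int m) (-(int m + int q)) (T (e + (2 * int r * int (0+q) - 2 * int g * int r)) * M s r g q)"
    using Lb_scale'[OF Lb_mono[OF Wm order_refl] bnd] G2 by simp
  thus ?case unfolding eq by (rule Lb_int)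
next
  case (G4 s g m h e B n)
  have hyp: "Lb (int s * int g) (-(int s + int g)) (- int g) (x3^s * x4^g)" using G4.prems[of g s] G4.hyps(1) by simp
  have "Lb (int s * int g + int r * int q - int r * (- int g) - (-(int s + int g)) * int q) (-(int s + int g)) (- int g - int q) (x3^s * x4^g * x0^q * x1^r)"
    by (rule MulR01[OF hyp]) auto
  hence "Lb (int s * int g + int r * int q - int r * (- int g) - (-(int s + int g)) * int q + e) (-(int s + int g)) (- int g - int q) (T e * (x3^s * x4^g * x0^q * x1^r))"
    by (rule Lb_scale)
  hence "Lb (int s * int g + int r * int q - int r * (- int g) - (-(int s + int g)) * int q + e) (-(int s + int g)) (- int g - int q) (of_int n * (T e * (x3^s * x4^g * x0^q * x1^r)))"
    by (rule Lb_int)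
  moreover have "int s * int g + int r * int q - int r * (- int g) - (-(int s + int g)) * int q + e \<le> B + int r * int q + int r * int m + int m * int q"
  proof -
    have "int r * int g \<le> int r * int m" using G4 by (intro mult_left_mono) auto
    moreover have "(int s + int g) * int q \<le> int m * int q" using G4 by (intro mult_right_mono) auto
    moreover have "e + int s * int g \<le> B" using G4 by simp
    moreover have "int s * int g + int r * int q - int r * (- int g) - (-(int s + int g)) * int q + e =
      (e + int s * int g) + int r * int q + int r * int g + (int s + int g) * int q" by (simp add: algebra_simps)
    ultimately show ?thesis by linarith
  qed
  ultimately have "Lb (B + int r * int q + int r * int m + int m * int q) (- int m) (-(int m + int q)) (of_int n * (T e * (x3^s * x4^g * x0^q * x1^r)))"
    by (rule Lb_mono) (use G4 in auto)
  thus ?case by (simp add: mult.assoc)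
next
  case (Gadd m h B x y) thus ?case by (simp add: distrib_right Lbadd)
qed

lemma G1R1: "Good1 0 m h B Z \<Longrightarrow>
  (\<And>g. int g \<le> int m - h \<Longrightarrow> LbE (int r * int g) (- int g) (x4^g * x1^r)) \<Longrightarrow>
  LbE (B + int r * (int m - h)) (- int m) (Z * x1^r)"
proof (induction rule: Good1.induct)
  case (G0 m h B) thus ?case by (auto simp: LbE_def intro: Lb0)
next
  case (G2 s m h g e B n)
  have eq: "of_int n * T e * (x3^(0+s) * x2^g) * x1^r = of_int n * (T (e + (2 * int r * int (0+0) - 2 * int g * int r)) * M s r g 0)"
  proof -
    have "of_int n * T e * (x3^(0+s) * x2^g) * x1^r = of_int n * (T e * (M s 0 g 0 * x0^0 * x1^r))"
      by (simp add: x3x2M mult.assoc)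
    thus ?thesis by (simp only: MR T_add2 add_0)
  qed
  have Wm: "Lb ((int s - int r) * (0 - int g)) (- int s) 0 (M s r g 0)" using W[of s r 0 g] by simp
  have bnd: "(int s - int r) * (0 - int g) + (e + (2 * int r * int (0+0) - 2 * int g * int r)) \<le> B + int r * (int m - h)"
  proof -
    have ex: "(int s - int r) * (0 - int g) + (e + (2 * int r * int (0+0) - 2 * int g * int r)) =
      e - int s * int g - int r * int g" by (simp add: algebra_simps)
    have "- int r * int g \<le> int r * (int m - h)"
    proof -
      have "- int g \<le> int m - h" using G2 by simp
      hence "int r * (- int g) \<le> int r * (int m - h)" by (intro mult_left_mono) auto
      thus ?thesis by simp
    qed
    moreover have "e - int s * int g \<le> B" using G2 by simp
    ultimately show ?thesis unfolding ex by linarith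
  qed
  have "Lb (B + int r * (int m - h)) (- int s) (- int m) (T (e + (2 * int r * int (0+0) - 2 * int g * int r)) * M s r g 0)"
    using Lb_scale'[OF Lb_mono[OF Wm order_refl order_refl] bnd] by simp
  hence "Lb (B + int r * (int m - h)) (- int s) (- int m) (of_int n * T e * (x3^(0+s) * x2^g) * x1^r)"
    unfolding eq by (rule Lb_int)
  thus ?case by (rule LbE_I)
next
  case (G4 s g m h e B n)
  have "LbE (int r * int g) (- int g) (x4^g * x1^r)" using G4 by simp
  then obtain R where hR: "Lb (int r * int g) R (- int g) (x4^g * x1^r)" unfolding LbE_def by blast
  have "Lb (int r * int g - int s * (- int g)) (min R 0 - int s) (- int g) (x3^s * (x4^g * x1^r))"
    by (rule MulL3[OF Lb_mono[OF hR order_refl]]) auto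
  hence "Lb (int r * int g - int s * (- int g) + e) (min R 0 - int s) (- int g) (of_int n * (T e * (x3^s * (x4^g * x1^r))))"
    by (intro Lb_int Lb_scale)
  moreover have "int r * int g - int s * (- int g) + e \<le> B + int r * (int m - h)"
  proof -
    have "int g \<le> int m - h" using G4 by simp
    hence "int r * int g \<le> int r * (int m - h)" by (intro mult_left_mono) auto
    moreover have "e + int s * int g \<le> B" using G4 by simp
    ultimately show ?thesis by simp
  qed
  ultimately have "LbE (B + int r * (int m - h)) (- int m) (of_int n * (T e * (x3^s * (x4^g * x1^r))))"
    using G4 by (intro LbE_I) (erule Lb_mono, auto)
  thus ?case by (simp add: mult.assoc)
next
  case (Gadd m h B x y) thus ?case by (simp add: distrib_right LbE_add)
qed

lemma X4prefix: "Good1 0 p (int g) 0 (x4^p * x2^g)"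
proof (induction p)
  case 0
  show ?case by (rule G2I[where s=0 and g=g and n=1 and e=0]) auto
next
  case (Suc p)
  have "Good1 0 (Suc p) (int g) (0 + int 0) (T (2 * int 0) * (x4 * (x4^p * x2^g)))"
    by (rule G1_X4[OF Suc.IH])
  thus ?case by (simp add: mult.assoc)
qed

lemma x4_F1_D1: "x4^p = F1 p - D1 p" by (simp add: D1_def)

lemma F1part: "Lb (int p * int s + int p * int g + int s * int g) (- int p) (-(int p + int g)) (F1 p * x0^g * x1^s)"
proof -
  have eq: "F1 p * x0^g * x1^s = T (- (int p * int p) + (2 * int s * int (p + g) - 2 * int 0 * int s)) * M p (0 + s) 0 (p + g)"
  proof -
    have "F1 p * x0^g * x1^s = T (- (int p * int p)) * (M p 0 0 p * x0^g * x1^s)"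
      unfolding F1_def M_def by (simp add: mult.assoc)
    thus ?thesis by (simp only: MR T_add2)
  qed
  have Wm: "Lb ((int p - int (0+s)) * (int (p+g) - int 0)) (- int p) (- int (p+g)) (M p (0+s) 0 (p+g))"
    by (rule W)
  have ex: "(int p - int (0+s)) * (int (p+g) - int 0) + (- (int p * int p) + (2 * int s * int (p + g) - 2 * int 0 * int s))
    = int p * int s + int p * int g + int s * int g" by (simp add: algebra_simps)
  let ?K = "- (int p * int p) + (2 * int s * int (p + g) - 2 * int 0 * int s)"
  have X: "Lb ((int p - int (0+s)) * (int (p+g) - int 0) + ?K) (- int p) (- int (p+g)) (T ?K * M p (0 + s) 0 (p + g))"
    by (rule Lb_scale[OF Wm])
  have s2: "-(int p + int g) \<le> - int (p+g)" by simp
  show ?thesis unfolding eq using Lb_mono[OF X[unfolded ex] order_refl order_refl s2] .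
qed

lemma G2L4: "Good2 0 m h B Z \<Longrightarrow> (\<And>g u. g \<le> Suc p' \<Longrightarrow> LbE (int u * int g) (- int g) (x4^g * x1^u)) \<Longrightarrow>
  LbE (B + int (Suc p') * int m) (-(int (Suc p') + int m)) (x4^(Suc p') * Z)"
proof (induction rule: Good2.induct)
  case (H0 m h B) thus ?case by (auto simp: LbE_def intro: Lb0)
next
  case (H2 s m h g e B n)
  let ?p = "Suc p'"
  have eq: "x4^?p * (of_int n * T e * (x2^g * x1^(0+s))) = of_int n * (T e * (x4^?p * x2^g * x1^s))"
    unfolding coef_left by (simp only: mult.assoc add_0)
  have L: "LbE (0 + int s * (int ?p - int g)) (- int ?p) (x4^?p * x2^g * x1^s)"
    by (rule G1R1[OF X4prefix]) (use H2.prems in auto)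
  have b: "0 + int s * (int ?p - int g) + e \<le> B + int ?p * int m"
  proof -
    have "int s * int ?p \<le> int m * int ?p" using H2 by (intro mult_right_mono) auto
    moreover have "e - int s * int g \<le> B" using H2 by simp
    ultimately show ?thesis by (simp add: algebra_simps)
  qed
  have "LbE (B + int ?p * int m) (- int ?p) (T e * (x4^?p * x2^g * x1^s))" by (rule LbE_scale[OF L b])
  hence "LbE (B + int ?p * int m) (-(int ?p + int m)) (T e * (x4^?p * x2^g * x1^s))" by (rule LbE_mono) auto
  hence "LbE (B + int ?p * int m) (-(int ?p + int m)) (of_int n * (T e * (x4^?p * x2^g * x1^s)))" by (rule LbE_int)
  thus ?case unfolding eq .
next
  case (H4 s g m h e B n)
  let ?p = "Suc p'"
  have eq: "x4^?p * (of_int n * T e * (x0^g * x1^(0+s))) = of_int n * (T e * (F1 ?p * x0^g * x1^s)) - of_int n * (T e * (x3^0 * D1 (Suc p') * x0^g * x1^s))"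
    unfolding coef_left add_0 x4_F1_D1[of ?p] by (simp only: left_diff_distrib right_diff_distrib mult.assoc power_0 mult_1_left)
  have a1: "LbE (B + int ?p * int m) (-(int ?p + int m)) (of_int n * (T e * (F1 ?p * x0^g * x1^s)))"
  proof (intro LbE_int LbE_scale[where d="int ?p * int s + int ?p * int g + int s * int g"])
    show "LbE (int ?p * int s + int ?p * int g + int s * int g) (-(int ?p + int m)) (F1 ?p * x0^g * x1^s)"
    proof -
      have "-(int ?p + int m) \<le> -(int ?p + int g)" using H4 by simp
      thus ?thesis by (intro LbE_I[OF Lb_mono[OF F1part[of ?p s g] order_refl order_refl]])
    qed
    have "int ?p * (int s + int g) \<le> int ?p * int m" using H4 by (intro mult_left_mono) auto
    moreover have "e + int s * int g \<le> B" using H4 by simp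
    ultimately show "int ?p * int s + int ?p * int g + int s * int g + e \<le> B + int ?p * int m" by (simp add: algebra_simps)
  qed
  have D: "Lb (int 0 * int (Suc p') - 4 + int s * int g + int s * int p' + int p' * int g) (- int p') (-(int p' + int g)) (x3^0 * D1 (Suc p') * x0^g * x1^s)"
    by (rule G1R01[OF Good_D1[of 0 p']]) (use PP in blast)
  have a2: "LbE (B + int ?p * int m) (-(int ?p + int m)) (of_int n * (T e * (x3^0 * D1 (Suc p') * x0^g * x1^s)))"
  proof (intro LbE_int LbE_scale[where d="int 0 * int (Suc p') - 4 + int s * int g + int s * int p' + int p' * int g"])
    show "LbE (int 0 * int (Suc p') - 4 + int s * int g + int s * int p' + int p' * int g) (-(int ?p + int m)) (x3^0 * D1 (Suc p') * x0^g * x1^s)"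
    proof -
      have "-(int ?p + int m) \<le> -(int p' + int g)" using H4 by simp
      thus ?thesis by (intro LbE_I[OF Lb_mono[OF D order_refl order_refl]])
    qed
    have "int p' * (int s + int g) \<le> int ?p * int m" using H4 by (intro mult_mono) auto
    moreover have "e + int s * int g \<le> B" using H4 by simp
    ultimately show "int 0 * int (Suc p') - 4 + int s * int g + int s * int p' + int p' * int g + e \<le> B + int ?p * int m"
      by (simp add: algebra_simps)
  qed
  show ?case unfolding eq using a1 a2 by (rule LbE_diff)
next
  case (Hadd m h B x y) thus ?case by (simp add: distrib_left LbE_add)
qed

end

context qca begin

lemma mu_neg: "mu1E t X (- int u) (- int c) = T (- (int u * int c)) * (x4^c * x1^u)"
  by (simp add: mu1E_def pp_def mult.assoc)

lemma x4x1_G2: "x4^c * x1^c = T (int c * int c) * (x0^c + D2f c)"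
  by (simp add: D2f_def G2f_def T_add2)

lemma Q_big: "c = Suc c' \<Longrightarrow> u = c + k \<Longrightarrow>
  mu1E t X (- int u) (- int c) - SE (int u - int c) (- int c) = T (- (int k * int c)) * (D2f c * x1^k)"
proof -
  assume c: "c = Suc c'" and u: "u = c + k"
  have "mu1E t X (- int u) (- int c) = T (- (int u * int c)) * ((x4^c * x1^c) * x1^k)"
    unfolding mu_neg u by (simp add: power_add mult.assoc)
  also have "... = T (- (int u * int c) + int c * int c) * (x0^c * x1^k + D2f c * x1^k)"
    unfolding x4x1_G2 by (simp only: mult.assoc T_add2 distrib_right)
  also have "- (int u * int c) + int c * int c = - (int k * int c)" unfolding u by (simp add: algebra_simps)
  finally have m: "mu1E t X (- int u) (- int c) = T (- (int k * int c)) * (x0^c * x1^k + D2f c * x1^k)" .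
  have "SE (int u - int c) (- int c) = T (int k * int c) * (x1^k * x0^c)"
    using SE_pn[of k c] u by simp
  also have "... = T (- (int k * int c)) * (x0^c * x1^k)"
  proof -
    have "x0^c * x1^k = T (2 * int c * int k) * (x1^k * x0^c)" by (rule R01p)
    hence h: "x1^k * x0^c = T (-2 * int c * int k) * (x0^c * x1^k)" by (simp add: T_add2)
    have "T (int k * int c) * (x1^k * x0^c) = T (int k * int c + -2 * int c * int k) * (x0^c * x1^k)"
      unfolding h by (rule T_add2)
    also have "int k * int c + -2 * int c * int k = - (int k * int c)" by (simp add: algebra_simps)
    finally show ?thesis .
  qed
  finally have s: "SE (int u - int c) (- int c) = T (- (int k * int c)) * (x0^c * x1^k)" .
  show ?thesis unfolding m s by (simp add: distrib_left)
qed

lemma Q_mid: "c = p + u \<Longrightarrow>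
  mu1E t X (- int u) (- int c) - SE (int u - int c) (- int c) = T (- (int u * int p)) * (x4^p * D2f u - D1 p * x0^u)"
proof -
  assume c: "c = p + u"
  have "mu1E t X (- int u) (- int c) = T (- (int u * int c)) * (x4^p * (x4^u * x1^u))"
    unfolding mu_neg c by (simp add: power_add mult.assoc)
  also have "... = T (- (int u * int c) + int u * int u) * (x4^p * x0^u + x4^p * D2f u)"
    unfolding x4x1_G2 by (simp only: mult.assoc T_left[of "x4^p"] T_add2 distrib_left)
  also have "x4^p * x0^u = T (- (int p * int p)) * (x3^p * x0^c) - D1 p * x0^u"
    unfolding x4_F1_D1[of p] F1_def c by (simp add: power_add mult.assoc left_diff_distrib)
  also have "- (int u * int c) + int u * int u = - (int u * int p)" unfolding c by (simp add: algebra_simps)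
  finally have m: "mu1E t X (- int u) (- int c) = T (- (int u * int p)) * (T (- (int p * int p)) * (x3^p * x0^c) - D1 p * x0^u + x4^p * D2f u)" .
  have s: "SE (int u - int c) (- int c) = T (- (int u * int p)) * (T (- (int p * int p)) * (x3^p * x0^c))"
  proof -
    have "SE (int u - int c) (- int c) = T (- (int p * int c)) * (x3^p * x0^c)"
      using SE_nn[of p c] c by simp
    also have "- (int p * int c) = - (int u * int p) + - (int p * int p)" unfolding c by (simp add: algebra_simps)
    finally show ?thesis by (simp add: T_add2)
  qed
  show ?thesis unfolding m s by (simp add: algebra_simps)
qed

lemma Q: "LbE (-1) (- int c) (mu1E t X (- int u) (- int c) - SE (int u - int c) (- int c))"
proof (induction c arbitrary: u rule: less_induct)
  case (less c)
  have QQ: "LbE (int u' * int g) (- int g) (x4^g * x1^u')" if "g < c" for g u'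
  proof -
    have D: "LbE (-1) (- int g) (mu1E t X (- int u') (- int g) - SE (int u' - int g) (- int g))"
      by (rule less.IH[OF that])
    have e0: "T (int u' * int g) * mu1E t X (- int u') (- int g) = x4^g * x1^u'"
      unfolding mu_neg by (simp only: T_add2) simp
    have e: "x4^g * x1^u' = T (int u' * int g) * SE (int u' - int g) (- int g) + T (int u' * int g) * (mu1E t X (- int u') (- int g) - SE (int u' - int g) (- int g))"
      unfolding right_diff_distrib e0 by simp
    show ?thesis unfolding e
    proof (rule LbE_add)
      show "LbE (int u' * int g) (- int g) (T (int u' * int g) * SE (int u' - int g) (- int g))"
        by (rule LbE_I[OF Lb_single[of "int u' * int g" "int u' * int g" "int u' - int g" "int u' - int g" "- int g" "- int g"]]) auto
      show "LbE (int u' * int g) (- int g) (T (int u' * int g) * (mu1E t X (- int u') (- int g) - SE (int u' - int g) (- int g)))"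
        by (rule LbE_scale[OF D]) simp
    qed
  qed
  show ?case
  proof (cases c)
    case 0
    have "mu1E t X (- int u) (- int c) - SE (int u - int c) (- int c) = 0"
      using 0 mu_neg[of u 0] by (simp add: stdE_def pp_def)
    thus ?thesis by (auto simp: LbE_def intro: Lb0)
  next
    case (Suc c')
    show ?thesis
    proof (cases "u = 0")
      case True
      have "mu1E t X (- int u) (- int c) - SE (int u - int c) (- int c) = x3^0 * x4^c - T (int 0 * int c) * SE (-(int 0 + int c)) (- int c)"
        using True mu_neg[of 0 c] by simp
      moreover have "Lb (int 0 * int c - 1) (-(int 0 + int c)) (- int c) (x3^0 * x4^c - T (int 0 * int c) * SE (-(int 0 + int c)) (- int c))"
        using PP by blast
      ultimately show ?thesis by (auto intro: LbE_I)
    next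
      case u0: False
      show ?thesis
      proof (cases "c \<le> u")
        case True
        then obtain k where u: "u = c + k" using le_Suc_ex by blast
        have "Lb (int k * int (Suc c') - 4) 0 (- int c') (D2f (Suc c') * x1^k)"
          using conv2[OF Good_D2[of k c']] .
        hence "Lb (-4) 0 (- int c') (T (- (int k * int c)) * (D2f c * x1^k))"
          using Suc by (auto intro: Lb_scale')
        hence "Lb (-1) 0 (- int c) (T (- (int k * int c)) * (D2f c * x1^k))"
          by (rule Lb_mono) (use Suc in auto)
        hence "LbE (-1) (- int c) (T (- (int k * int c)) * (D2f c * x1^k))"
          by (rule LbE_I)
        thus ?thesis using Q_big[OF Suc u] by simp
      next
        case False
        define p' where "p' = c - u - 1"
        have p: "c = Suc p' + u" using False unfolding p'_def by simp
        obtain u' where u': "u = Suc u'" using u0 by (cases u) auto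
        have A: "LbE (int 0 * int (Suc u') - 4 + int (Suc p') * int u') (-(int (Suc p') + int u')) (x4^(Suc p') * (D2f (Suc u') * x1^0))"
        proof (rule G2L4[OF Good_D2[of 0 u']])
          fix g u'' assume "g \<le> Suc p'"
          hence "g < c" using p u' by simp
          thus "LbE (int u'' * int g) (- int g) (x4^g * x1^u'')" by (rule QQ)
        qed
        have B: "Lb (int 0 * int (Suc p') - 4 + int 0 * int u + int 0 * int p' + int p' * int u) (- int p') (-(int p' + int u)) (x3^0 * D1 (Suc p') * x0^u * x1^0)"
          by (rule G1R01[OF Good_D1[of 0 p']]) (use PP in blast)
        have b1: "int 0 * int (Suc u') - 4 + int (Suc p') * int u' \<le> int u * int (Suc p') - 1"
          using u' by (simp add: algebra_simps)
        have s1: "- int c \<le> -(int (Suc p') + int u')" using p u' by simp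
        have A': "LbE (int u * int (Suc p') - 1) (- int c) (x4^(Suc p') * D2f u)"
          using LbE_mono[OF A b1 s1] u' by simp
        have b2: "int 0 * int (Suc p') - 4 + int 0 * int u + int 0 * int p' + int p' * int u \<le> int u * int (Suc p') - 1"
          by (simp add: algebra_simps)
        have s2: "- int c \<le> -(int p' + int u)" using p by simp
        have B': "LbE (int u * int (Suc p') - 1) (- int c) (D1 (Suc p') * x0^u)"
          using LbE_mono[OF LbE_I[OF B] b2 s2] by simp
        have "LbE (-1) (- int c) (T (- (int u * int (Suc p'))) * (x4^(Suc p') * D2f u - D1 (Suc p') * x0^u))"
          by (rule LbE_scale[OF LbE_diff[OF A' B']]) simp
        thus ?thesis using Q_mid[OF p] by simp
      qed
    qed
  qed
qed

end

context qca begin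

lemma main: "in_qminus_Aplus t X (mu1E t X a b - stdE t X (fst (psi (a, b))) (snd (psi (a, b))))"
proof (cases "b \<ge> 0")
  case True
  define Bn where "Bn = nat b"
  have b: "b = int Bn" using True unfolding Bn_def by simp
  have "mu1E t X a b = stdE t X (fst (psi (a, b))) (snd (psi (a, b)))"
  proof (cases "a \<ge> 0")
    case True
    define A where "A = nat a"
    have a: "a = int A" using True unfolding A_def by simp
    have "mu1E t X a b = T (- (int A * int Bn)) * (x2^Bn * x3^A)"
      unfolding a b by (simp add: mu1E_def pp_def mult.assoc)
    also have "... = T (- (int A * int Bn) + 2 * int Bn * int A) * (x3^A * x2^Bn)"
      using qpow[OF R23, of Bn A] by (simp add: T_add2)
    also have "- (int A * int Bn) + 2 * int Bn * int A = int A * int Bn" by (simp add: algebra_simps)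
    also have "T (int A * int Bn) * (x3^A * x2^Bn) = stdE t X (- int A) (int Bn)" by (rule SE_np[symmetric])
    finally show ?thesis unfolding psi_def a b by (simp add: pp_def)
  next
    case False
    define U where "U = nat (- a)"
    have a: "a = - int U" using False unfolding U_def by simp
    have "mu1E t X a b = T (int U * int Bn) * (x2^Bn * x1^U)"
      unfolding a b by (simp add: mu1E_def pp_def mult.assoc)
    also have "... = T (int U * int Bn + -2 * int Bn * int U) * (x1^U * x2^Bn)"
      using R21p[of Bn U] by (simp add: T_add2)
    also have "int U * int Bn + -2 * int Bn * int U = - (int U * int Bn)" by (simp add: algebra_simps)
    also have "T (- (int U * int Bn)) * (x1^U * x2^Bn) = stdE t X (int U) (int Bn)" by (rule SE_pp[symmetric])
    finally show ?thesis unfolding psi_def a b by (simp add: pp_def)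
  qed
  thus ?thesis using Lb_to_in[OF Lb0] by simp
next
  case False
  define C where "C = nat (- b)"
  have b: "b = - int C" using False unfolding C_def by simp
  show ?thesis
  proof (cases "a \<ge> 0")
    case True
    define A where "A = nat a"
    have a: "a = int A" using True unfolding A_def by simp
    have m: "mu1E t X a b = T (- (int A * int C)) * (x3^A * x4^C)"
    proof -
      have "mu1E t X a b = T (int A * int C) * (x4^C * x3^A)"
        unfolding a b by (simp add: mu1E_def pp_def mult.assoc)
      also have "... = T (int A * int C + -2 * int C * int A) * (x3^A * x4^C)"
        using qpow[OF R43, of C A] by (simp add: T_add2)
      also have "int A * int C + -2 * int C * int A = - (int A * int C)" by (simp add: algebra_simps)
      finally show ?thesis .
    qed
    have ps: "fst (psi (a, b)) = - (int A + int C)" "snd (psi (a, b)) = - int C"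
      unfolding psi_def a b by (auto simp: pp_def)
    have "Lb (int A * int C - 1) (-(int A + int C)) (- int C) (x3^A * x4^C - T (int A * int C) * SE (-(int A + int C)) (- int C))"
      using PP by blast
    hence "Lb (-1) (-(int A + int C)) (- int C) (T (- (int A * int C)) * (x3^A * x4^C - T (int A * int C) * SE (-(int A + int C)) (- int C)))"
      by (rule Lb_scale') simp
    moreover have "T (- (int A * int C)) * (x3^A * x4^C - T (int A * int C) * SE (-(int A + int C)) (- int C))
      = mu1E t X a b - stdE t X (fst (psi (a, b))) (snd (psi (a, b)))"
      unfolding m ps by (simp add: right_diff_distrib T_add2)
    ultimately show ?thesis using Lb_to_in by simp
  next
    case False
    define U where "U = nat (- a)"
    have a: "a = - int U" using False unfolding U_def by simp
    have ps: "fst (psi (a, b)) = int U - int C" "snd (psi (a, b)) = - int C"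
      unfolding psi_def a b by (auto simp: pp_def)
    have "LbE (-1) (- int C) (mu1E t X (- int U) (- int C) - SE (int U - int C) (- int C))" by (rule Q)
    thus ?thesis unfolding ps unfolding a b LbE_def using Lb_to_in by blast
  qed
qed

end

theorem lemma4p8:
  fixes t x1 x2 :: "'a::division_ring" and X :: "int \<Rightarrow> 'a" and a b :: int
  assumes "qtorus_embedding t x1 x2"
    and "X 1 = x1" and "X 2 = x2"
    and "cluster_seq t X"
  shows "in_qminus_Aplus t X
           (mu1E t X a b - stdE t X (fst (psi (a, b))) (snd (psi (a, b))))"
proof -
  interpret qca t X
    using assms unfolding qtorus_embedding_def by unfold_locales auto
  show ?thesis by (rule main)
qed

end
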